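(* Let $\gamma$ be an $n\times m$ integer matrix satisfying conditions (i) and (ii), and let $a\in\mathcal{A}(\gamma)^\pm$ be homogeneous of some degree $g\in\mathbb{Z}^m$. If $a^\ast a=0$, then $a=0$.
   Context: $\Bbbk$ is an algebraically closed field of characteristic $0$. Fix $p,q\ge0$, $n=p+q$, a sign $\pm$, $\mp=-\pm$; $p(i)=0$ for $i\le p$, $p(i)=1$ for $i>p$. $\lambda_{ij}=\mp(-1)^{p(i)p(j)}$; $R=R^\pm_{p|q}=\Bbbk[u_1,\dots,u_n]/(u_i^2-u_i\mid\lambda_{ii}=-1)$; $\tau_i\in\mathrm{Aut}(R)$ with $\tau_i(u_i)=\lambda_{ii}(u_i-1)$, $\tau_i(u_j)=u_j$ ($j\ne i$). TGW algebras: for a TGW datum $(R,\sigma,t)$ (commuting automorphisms $\sigma_i$, central $t_i$) and nonzero scalars $\mu_{ij}$ ($i\ne j$), $\mathcal{A}_\mu(R,\sigma,t)$ is the quotient of the $R$-ring generated by $X_i,Y_i$ with relations $X_ir=\sigma_i(r)X_i$, $Y_ir=\sigma_i^{-1}(r)Y_i$, $Y_iX_i=t_i$, $X_iY_i=\sigma_i(t_i)$, $X_iY_j=\mu_{ij}Y_jX_i$ ($i\ne j$), graded by $\deg X_i=\mathbf{e}_i=-\deg Y_i$, $\deg R=0$, by the largest graded ideal meeting the degree-zero part trivially. The family $\mathcal{A}(\gamma)^\pm$: $\gamma=(\gamma_{ji})$ is an $n\times m$ integer matrix with (i) $|\gamma_{ji}|\le1$ whenever $\lambda_{jj}=-1$,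 and (ii) for all $i\ne i'$, either $\gamma_{ki}\gamma_{ki'}<0$ for some $k$ with $\lambda_{kk}=-1$, or $\gamma_{ki}\gamma_{ki'}\le0$ for all $k$. Then $\mathcal{A}(\gamma)^\pm=\mathcal{A}_\mu(R,\sigma,t)$ with index set $\{1,\dots,m\}$, $\sigma_i=\tau_1^{\gamma_{1i}}\cdots\tau_n^{\gamma_{ni}}$, $t_i=\prod_{j=1}^nu_{ji}$ with $u_{ji}=(u_j+\gamma_{ji}-1)\cdots(u_j+1)u_j$ if $\gamma_{ji}>0$, $1$ if $\gamma_{ji}=0$, $(u_j-|\gamma_{ji}|)\cdots(u_j-1)$ if $\gamma_{ji}<0$; and $\mu_{ij}=(\mp1)^{p'(i)p'(j)}(-1)^{\bar p(i)\bar p(j)}$ with $\bar p(i)=\sum_k\gamma_{ki}p(k)\bmod2$, $p'(i)=\sum_k\gamma_{ki}\bmod2$. Since $\mu$ is symmetric, $\mathcal{A}(\gamma)^\pm$ carries the involution $\ast$ (additive, $(ab)^\ast=b^\ast a^\ast$, $(a^\ast)^\ast=a$) with $X_i^\ast=Y_i$, $Y_i^\ast=X_i$, $r^\ast=r$ for $r\in R$. *)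

theory Defs
  imports "HOL-Library.Poly_Mapping" "HOL-Computational_Algebra.Polynomial"
begin

type_synonym 'k pol = "(nat \<Rightarrow>\<^sub>0 nat) \<Rightarrow>\<^sub>0 'k"

definition pc :: "'k::comm_ring_1 \<Rightarrow> 'k pol" where
  "pc c = Poly_Mapping.single 0 c"

definition var :: "nat \<Rightarrow> 'k::comm_ring_1 pol" where
  "var j = Poly_Mapping.single (Poly_Mapping.single j 1) 1"

definition psubst :: "(nat \<Rightarrow> 'k::comm_ring_1 pol) \<Rightarrow> 'k pol \<Rightarrow> 'k pol" where
  "psubst phi r = (\<Sum>mon\<in>Poly_Mapping.keys r.
      pc (Poly_Mapping.lookup r mon) * (\<Prod>v\<in>Poly_Mapping.keys mon. phi v ^ Poly_Mapping.lookup mon v))"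

definition par :: "nat \<Rightarrow> nat \<Rightarrow> int" where
  "par p i = (if i \<le> p then 0 else 1)"

text \<open>pm is the sign (+1 or -1), so mp = -pm.\<close>
definition lam :: "nat \<Rightarrow> int \<Rightarrow> nat \<Rightarrow> nat \<Rightarrow> int" where
  "lam p pm i j = (- pm) * (-1) ^ nat (par p i * par p j)"

definition tau :: "nat \<Rightarrow> int \<Rightarrow> nat \<Rightarrow> 'k::comm_ring_1 pol \<Rightarrow> 'k pol" where
  "tau p pm j = psubst (\<lambda>v. if v = j then of_int (lam p pm j j) * (var j - 1) else var v)"

definition tau_inv :: "nat \<Rightarrow> int \<Rightarrow> nat \<Rightarrow> 'k::comm_ring_1 pol \<Rightarrow> 'k pol" where
  "tau_inv p pm j = psubst (\<lambda>v. if v = j then of_int (lam p pm j j) * var j + 1 else var v)"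

definition tau_pow :: "nat \<Rightarrow> int \<Rightarrow> nat \<Rightarrow> int \<Rightarrow> 'k::comm_ring_1 pol \<Rightarrow> 'k pol" where
  "tau_pow p pm j k = (if 0 \<le> k then tau p pm j ^^ nat k else tau_inv p pm j ^^ nat (- k))"

definition sigma :: "nat \<Rightarrow> nat \<Rightarrow> int \<Rightarrow> (nat \<Rightarrow> nat \<Rightarrow> int) \<Rightarrow> nat \<Rightarrow> 'k::comm_ring_1 pol \<Rightarrow> 'k pol" where
  "sigma p q pm \<gamma> i = foldr (\<lambda>j f. tau_pow p pm j (\<gamma> j i) \<circ> f) [1..<p+q+1] id"

definition sigma_inv :: "nat \<Rightarrow> nat \<Rightarrow> int \<Rightarrow> (nat \<Rightarrow> nat \<Rightarrow> int) \<Rightarrow> nat \<Rightarrow> 'k::comm_ring_1 pol \<Rightarrow> 'k pol" where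
  "sigma_inv p q pm \<gamma> i = foldr (\<lambda>j f. tau_pow p pm j (- \<gamma> j i) \<circ> f) [1..<p+q+1] id"

definition uji :: "(nat \<Rightarrow> nat \<Rightarrow> int) \<Rightarrow> nat \<Rightarrow> nat \<Rightarrow> 'k::comm_ring_1 pol" where
  "uji \<gamma> j i = (if \<gamma> j i > 0 then (\<Prod>l\<in>{0..<nat (\<gamma> j i)}. var j + of_nat l)
                 else if \<gamma> j i < 0 then (\<Prod>l\<in>{1..nat (- \<gamma> j i)}. var j - of_nat l)
                 else 1)"

definition tt :: "nat \<Rightarrow> nat \<Rightarrow> (nat \<Rightarrow> nat \<Rightarrow> int) \<Rightarrow> nat \<Rightarrow> 'k::comm_ring_1 pol" where
  "tt p q \<gamma> i = (\<Prod>j\<in>{1..p+q}. uji \<gamma> j i)"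

definition pprime :: "nat \<Rightarrow> nat \<Rightarrow> (nat \<Rightarrow> nat \<Rightarrow> int) \<Rightarrow> nat \<Rightarrow> int" where
  "pprime p q \<gamma> i = (\<Sum>k\<in>{1..p+q}. \<gamma> k i) mod 2"

definition pbar :: "nat \<Rightarrow> nat \<Rightarrow> (nat \<Rightarrow> nat \<Rightarrow> int) \<Rightarrow> nat \<Rightarrow> int" where
  "pbar p q \<gamma> i = (\<Sum>k\<in>{1..p+q}. \<gamma> k i * par p k) mod 2"

definition mu :: "nat \<Rightarrow> nat \<Rightarrow> int \<Rightarrow> (nat \<Rightarrow> nat \<Rightarrow> int) \<Rightarrow> nat \<Rightarrow> nat \<Rightarrow> 'k::comm_ring_1" where
  "mu p q pm \<gamma> i j = of_int ((- pm) ^ nat (pprime p q \<gamma> i * pprime p q \<gamma> j)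
                        * (-1) ^ nat (pbar p q \<gamma> i * pbar p q \<gamma> j))"

datatype gsym = GX nat | GY nat

fun sidx :: "gsym \<Rightarrow> nat" where
  "sidx (GX i) = i" | "sidx (GY i) = i"

fun sswap :: "gsym \<Rightarrow> gsym" where
  "sswap (GX i) = GY i" | "sswap (GY i) = GX i"

text \<open>Elements: finite sums of (coefficient on the left) * word.\<close>
type_synonym 'k tgw = "gsym list \<Rightarrow>\<^sub>0 'k pol"

fun ssig :: "nat \<Rightarrow> nat \<Rightarrow> int \<Rightarrow> (nat \<Rightarrow> nat \<Rightarrow> int) \<Rightarrow> gsym \<Rightarrow> 'k::comm_ring_1 pol \<Rightarrow> 'k pol" where
  "ssig p q pm \<gamma> (GX i) = sigma p q pm \<gamma> i"
| "ssig p q pm \<gamma> (GY i) = sigma_inv p q pm \<gamma> i"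

text \<open>w r = sigw w (r) w for a word w.\<close>
fun sigw :: "nat \<Rightarrow> nat \<Rightarrow> int \<Rightarrow> (nat \<Rightarrow> nat \<Rightarrow> int) \<Rightarrow> gsym list \<Rightarrow> 'k::comm_ring_1 pol \<Rightarrow> 'k pol" where
  "sigw p q pm \<gamma> [] = id"
| "sigw p q pm \<gamma> (s # w) = ssig p q pm \<gamma> s \<circ> sigw p q pm \<gamma> w"

definition gmult :: "nat \<Rightarrow> nat \<Rightarrow> int \<Rightarrow> (nat \<Rightarrow> nat \<Rightarrow> int) \<Rightarrow> 'k::comm_ring_1 tgw \<Rightarrow> 'k tgw \<Rightarrow> 'k tgw" where
  "gmult p q pm \<gamma> f h = (\<Sum>w\<in>Poly_Mapping.keys f. \<Sum>v\<in>Poly_Mapping.keys h.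
      Poly_Mapping.single (w @ v) (Poly_Mapping.lookup f w * sigw p q pm \<gamma> w (Poly_Mapping.lookup h v)))"

definition Fcar :: "nat \<Rightarrow> nat \<Rightarrow> 'k::comm_ring_1 tgw set" where
  "Fcar n m = {f. (\<forall>w\<in>Poly_Mapping.keys f. \<forall>s\<in>set w. sidx s \<in> {1..m})
                \<and> (\<forall>w\<in>Poly_Mapping.keys f. \<forall>mon\<in>Poly_Mapping.keys (Poly_Mapping.lookup f w).
                     Poly_Mapping.keys mon \<subseteq> {1..n})}"

fun wdeg :: "gsym list \<Rightarrow> nat \<Rightarrow> int" where
  "wdeg [] = (\<lambda>_. 0)"
| "wdeg (GX i # w) = (\<lambda>k. (if k = i then 1 else 0) + wdeg w k)"
| "wdeg (GY i # w) = (\<lambda>k. (if k = i then -1 else 0) + wdeg w k)"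

definition homog :: "(nat \<Rightarrow> int) \<Rightarrow> 'k::comm_ring_1 tgw \<Rightarrow> bool" where
  "homog g f \<longleftrightarrow> (\<forall>w\<in>Poly_Mapping.keys f. wdeg w = g)"

definition hcomp :: "(nat \<Rightarrow> int) \<Rightarrow> 'k::comm_ring_1 tgw \<Rightarrow> 'k tgw" where
  "hcomp g f = (\<Sum>w\<in>{w\<in>Poly_Mapping.keys f. wdeg w = g}. Poly_Mapping.single w (Poly_Mapping.lookup f w))"

definition is_ideal :: "nat \<Rightarrow> nat \<Rightarrow> int \<Rightarrow> (nat \<Rightarrow> nat \<Rightarrow> int) \<Rightarrow> nat \<Rightarrow> 'k::comm_ring_1 tgw set \<Rightarrow> bool" where
  "is_ideal p q pm \<gamma> m J \<longleftrightarrow> J \<subseteq> Fcar (p+q) m \<and> 0 \<in> J \<and> (\<forall>a\<in>J. \<forall>b\<in>J. a - b \<in> J)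
     \<and> (\<forall>a\<in>J. \<forall>c\<in>Fcar (p+q) m. gmult p q pm \<gamma> c a \<in> J \<and> gmult p q pm \<gamma> a c \<in> J)"

definition graded_set :: "'k::comm_ring_1 tgw set \<Rightarrow> bool" where
  "graded_set J \<longleftrightarrow> (\<forall>a\<in>J. \<forall>g. hcomp g a \<in> J)"

definition gen_ideal :: "nat \<Rightarrow> nat \<Rightarrow> int \<Rightarrow> (nat \<Rightarrow> nat \<Rightarrow> int) \<Rightarrow> nat \<Rightarrow> 'k::comm_ring_1 tgw set \<Rightarrow> 'k tgw set" where
  "gen_ideal p q pm \<gamma> m S = \<Inter>{J. is_ideal p q pm \<gamma> m J \<and> S \<subseteq> J}"

text \<open>Defining relations: u_j^2 = u_j (lambda_jj = -1) (defining R), Y_iX_i = t_i,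
  X_iY_i = sigma_i(t_i), X_iY_j = mu_ij Y_jX_i (i \<noteq> j).\<close>
definition rels :: "nat \<Rightarrow> nat \<Rightarrow> int \<Rightarrow> (nat \<Rightarrow> nat \<Rightarrow> int) \<Rightarrow> nat \<Rightarrow> 'k::comm_ring_1 tgw set" where
  "rels p q pm \<gamma> m =
     {Poly_Mapping.single [] (var j ^ 2 - var j) | j. j \<in> {1..p+q} \<and> lam p pm j j = -1}
   \<union> {Poly_Mapping.single [GY i, GX i] 1 - Poly_Mapping.single [] (tt p q \<gamma> i) | i. i \<in> {1..m}}
   \<union> {Poly_Mapping.single [GX i, GY i] 1 - Poly_Mapping.single [] (sigma p q pm \<gamma> i (tt p q \<gamma> i)) | i. i \<in> {1..m}}
   \<union> {Poly_Mapping.single [GX i, GY j] 1 - Poly_Mapping.single [GY j, GX i] (pc (mu p q pm \<gamma> i j))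
        | i j. i \<in> {1..m} \<and> j \<in> {1..m} \<and> i \<noteq> j}"

definition Irel :: "nat \<Rightarrow> nat \<Rightarrow> int \<Rightarrow> (nat \<Rightarrow> nat \<Rightarrow> int) \<Rightarrow> nat \<Rightarrow> 'k::comm_ring_1 tgw set" where
  "Irel p q pm \<gamma> m = gen_ideal p q pm \<gamma> m (rels p q pm \<gamma> m)"

text \<open>Preimage of the largest graded ideal of F/Irel meeting the degree-zero part trivially:
  the kernel of F -> A(gamma)^pm.\<close>
definition Imax :: "nat \<Rightarrow> nat \<Rightarrow> int \<Rightarrow> (nat \<Rightarrow> nat \<Rightarrow> int) \<Rightarrow> nat \<Rightarrow> 'k::comm_ring_1 tgw set" where
  "Imax p q pm \<gamma> m = {a. \<exists>J. is_ideal p q pm \<gamma> m J \<and> graded_set J \<and> Irel p q pm \<gamma> m \<subseteq> J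
       \<and> J \<inter> {b. homog (\<lambda>_. 0) b} \<subseteq> Irel p q pm \<gamma> m \<and> a \<in> J}"

text \<open>The involution: X_i^* = Y_i, Y_i^* = X_i, r^* = r; (r w)^* = w^* r = sigw(w^*)(r) w^*.\<close>
definition starw :: "gsym list \<Rightarrow> gsym list" where
  "starw w = rev (map sswap w)"

definition gstar :: "nat \<Rightarrow> nat \<Rightarrow> int \<Rightarrow> (nat \<Rightarrow> nat \<Rightarrow> int) \<Rightarrow> 'k::comm_ring_1 tgw \<Rightarrow> 'k tgw" where
  "gstar p q pm \<gamma> f = (\<Sum>w\<in>Poly_Mapping.keys f.
      Poly_Mapping.single (starw w) (sigw p q pm \<gamma> (starw w) (Poly_Mapping.lookup f w)))"

end

theory Submission
  imports Defs "HOL-Library.Function_Algebras" "HOL-Library.Product_Plus"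
begin

definition lin :: "('a \<Rightarrow> 'b::zero \<Rightarrow> 'c::comm_monoid_add) \<Rightarrow> ('a \<Rightarrow>\<^sub>0 'b) \<Rightarrow> 'c" where
  "lin F p = (\<Sum>k\<in>Poly_Mapping.keys p. F k (Poly_Mapping.lookup p k))"

lemma lin_superset:
  assumes "finite K" "Poly_Mapping.keys p \<subseteq> K" "\<And>k. F k 0 = 0"
  shows "lin F p = (\<Sum>k\<in>K. F k (Poly_Mapping.lookup p k))"
  unfolding lin_def
  by (rule sum.mono_neutral_left) (use assms in \<open>auto simp: in_keys_iff\<close>)

lemma lin_zero [simp]: "lin F 0 = 0"
  by (simp add: lin_def)

lemma lin_single:
  assumes "\<And>k. F k 0 = 0"
  shows "lin F (Poly_Mapping.single k c) = F k c"
  using assms by (cases "c = 0") (auto simp: lin_def)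

lemma lin_add:
  fixes F :: "'a \<Rightarrow> 'b::comm_monoid_add \<Rightarrow> 'c::comm_monoid_add"
  assumes "\<And>k. F k 0 = 0" "\<And>k x y. F k (x + y) = F k x + F k y"
  shows "lin F (p + q) = lin F p + lin F q"
proof -
  let ?K = "Poly_Mapping.keys p \<union> Poly_Mapping.keys q"
  have "lin F (p + q) = (\<Sum>k\<in>?K. F k (Poly_Mapping.lookup (p+q) k))"
    using keys_add[of p q] assms by (intro lin_superset) auto
  also have "\<dots> = (\<Sum>k\<in>?K. F k (Poly_Mapping.lookup p k)) + (\<Sum>k\<in>?K. F k (Poly_Mapping.lookup q k))"
    by (simp add: lookup_add assms sum.distrib)
  also have "\<dots> = lin F p + lin F q"
    using assms by (simp add: lin_superset[of ?K p F] lin_superset[of ?K q F])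
  finally show ?thesis .
qed

lemma lin_sum:
  fixes F :: "'a \<Rightarrow> 'b::comm_monoid_add \<Rightarrow> 'c::comm_monoid_add"
  assumes "\<And>k. F k 0 = 0" "\<And>k x y. F k (x + y) = F k x + F k y"
  shows "lin F (\<Sum>i\<in>I. p i) = (\<Sum>i\<in>I. lin F (p i))"
  by (induction I rule: infinite_finite_induct) (auto simp: lin_add[OF assms])

lemma lin_uminus:
  fixes F :: "'a \<Rightarrow> 'b::ab_group_add \<Rightarrow> 'c::ab_group_add"
  assumes "\<And>k. F k 0 = 0" "\<And>k x y. F k (x + y) = F k x + F k y"
  shows "lin F (- p) = - lin F p"
proof -
  have "lin F (- p + p) = lin F (-p) + lin F p" by (rule lin_add[OF assms])
  then show ?thesis by (simp add: eq_neg_iff_add_eq_0)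
qed

lemma lin_diff:
  fixes F :: "'a \<Rightarrow> 'b::ab_group_add \<Rightarrow> 'c::ab_group_add"
  assumes "\<And>k. F k 0 = 0" "\<And>k x y. F k (x + y) = F k x + F k y"
  shows "lin F (p - q) = lin F p - lin F q"
proof -
  have "lin F (p + - q) = lin F p + lin F (-q)" by (rule lin_add[OF assms])
  moreover have "lin F (- q) = - lin F q" by (rule lin_uminus[OF assms])
  ultimately show ?thesis by simp
qed

lemma pm_expand:
  "p = (\<Sum>k\<in>Poly_Mapping.keys p. Poly_Mapping.single k (Poly_Mapping.lookup p k))"
  by (rule poly_mapping_eqI)
     (auto simp: lookup_sum lookup_single when_def in_keys_iff sum.delta' split: if_splits)

lemma pm_induct [case_names zero single add]:
  fixes P :: "('a \<Rightarrow>\<^sub>0 'b::comm_monoid_add) \<Rightarrow> bool"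
  assumes "P 0" "\<And>k c. P (Poly_Mapping.single k c)" "\<And>p q. P p \<Longrightarrow> P q \<Longrightarrow> P (p + q)"
  shows "P p"
proof -
  have "\<And>K. finite K \<Longrightarrow> P (\<Sum>k\<in>K. Poly_Mapping.single k (Poly_Mapping.lookup p k))"
  proof -
    fix K :: "'a set" assume "finite K"
    then show "P (\<Sum>k\<in>K. Poly_Mapping.single k (Poly_Mapping.lookup p k))"
      by (induction K rule: finite_induct) (auto intro: assms)
  qed
  then show ?thesis using pm_expand[of p] by (metis finite_keys)
qed


section \<open>Evaluation of polynomials\<close>

definition mev :: "(nat \<Rightarrow> 'k::comm_ring_1) \<Rightarrow> (nat \<Rightarrow>\<^sub>0 nat) \<Rightarrow> 'k" where
  "mev P mon = (\<Prod>v\<in>Poly_Mapping.keys mon. P v ^ Poly_Mapping.lookup mon v)"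

definition ev :: "(nat \<Rightarrow> 'k::comm_ring_1) \<Rightarrow> 'k pol \<Rightarrow> 'k" where
  "ev P r = lin (\<lambda>mon c. c * mev P mon) r"

lemma mev_superset:
  assumes "finite K" "Poly_Mapping.keys mon \<subseteq> K"
  shows "mev P mon = (\<Prod>v\<in>K. P v ^ Poly_Mapping.lookup mon v)"
  unfolding mev_def
  by (rule prod.mono_neutral_left) (use assms in \<open>auto simp: in_keys_iff\<close>)

lemma mev_add: "mev P (a + b) = mev P a * mev P b"
proof -
  let ?K = "Poly_Mapping.keys a \<union> Poly_Mapping.keys b"
  have "mev P (a + b) = (\<Prod>v\<in>?K. P v ^ Poly_Mapping.lookup (a+b) v)"
    using keys_add[of a b] by (intro mev_superset) auto
  also have "\<dots> = (\<Prod>v\<in>?K. P v ^ Poly_Mapping.lookup a v) * (\<Prod>v\<in>?K. P v ^ Poly_Mapping.lookup b v)"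
    by (simp add: lookup_add power_add prod.distrib)
  also have "\<dots> = mev P a * mev P b"
    by (simp add: mev_superset[of ?K a] mev_superset[of ?K b])
  finally show ?thesis .
qed

lemma mev_zero [simp]: "mev P 0 = 1"
  by (simp add: mev_def)

lemma mev_single [simp]: "mev P (Poly_Mapping.single j e) = P j ^ e"
  by (simp add: mev_def)

lemma ev_add: "ev P (r + s) = ev P r + ev P s"
  unfolding ev_def by (rule lin_add) (auto simp: algebra_simps)

lemma ev_uminus: "ev P (- r) = - ev P r"
  unfolding ev_def by (rule lin_uminus) (auto simp: algebra_simps)

lemma ev_diff: "ev P (r - s) = ev P r - ev P s"
  unfolding ev_def by (rule lin_diff) (auto simp: algebra_simps)

lemma ev_sum: "ev P (\<Sum>i\<in>I. r i) = (\<Sum>i\<in>I. ev P (r i))"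
  unfolding ev_def by (rule lin_sum) (auto simp: algebra_simps)

lemma ev_zero [simp]: "ev P 0 = 0"
  by (simp add: ev_def)

lemma ev_single: "ev P (Poly_Mapping.single mon c) = c * mev P mon"
  unfolding ev_def by (rule lin_single) auto

lemma ev_mult_single: "ev P (Poly_Mapping.single a c * s) = c * mev P a * ev P s"
proof (induction s rule: pm_induct)
  case zero then show ?case by simp
next
  case (single k d) then show ?case
    by (simp add: mult_single ev_single mev_add)
next
  case (add p q) then show ?case
    by (simp add: distrib_left ev_add algebra_simps)
qed

lemma ev_mult: "ev P (r * s) = ev P r * ev P s"
proof (induction r rule: pm_induct)
  case zero then show ?case by simp
next
  case (single k c) then show ?case
    by (simp add: ev_mult_single ev_single)
next
  case (add p q) then show ?case
    by (simp add: distrib_right ev_add algebra_simps)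
qed

lemma ev_pc [simp]: "ev P (pc c) = c"
  by (simp add: pc_def ev_single)

lemma ev_one [simp]: "ev P 1 = 1"
  using ev_pc[of P 1] by (simp add: pc_def)

lemma ev_var [simp]: "ev P (var j) = P j"
  by (simp add: var_def ev_single)

lemma ev_of_int [simp]: "ev P (of_int c) = of_int c"
  using ev_pc[of P "of_int c"] by (simp add: pc_def)

lemma ev_of_nat [simp]: "ev P (of_nat c) = of_nat c"
  using ev_pc[of P "of_nat c"] by (simp add: pc_def)

lemma ev_power: "ev P (r ^ e) = ev P r ^ e"
  by (induction e) (simp_all add: ev_mult)

lemma ev_prod: "ev P (\<Prod>i\<in>I. r i) = (\<Prod>i\<in>I. ev P (r i))"
  by (induction I rule: infinite_finite_induct) (simp_all add: ev_mult)

lemma ev_psubst: "ev P (psubst \<phi> r) = ev (\<lambda>v. ev P (\<phi> v)) r"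
proof -
  have "ev P (psubst \<phi> r) = (\<Sum>mon\<in>Poly_Mapping.keys r. Poly_Mapping.lookup r mon *
      (\<Prod>v\<in>Poly_Mapping.keys mon. ev P (\<phi> v) ^ Poly_Mapping.lookup mon v))"
    unfolding psubst_def by (simp add: ev_sum ev_mult ev_prod ev_power)
  then show ?thesis by (simp add: ev_def lin_def mev_def)
qed

lemma ev_cong_vars:
  assumes "\<And>mon v. mon \<in> Poly_Mapping.keys r \<Longrightarrow> v \<in> Poly_Mapping.keys mon \<Longrightarrow> P v = Q v"
  shows "ev P r = ev Q r"
  unfolding ev_def lin_def mev_def using assms
  by (intro sum.cong refl arg_cong2[where f="(*)"] prod.cong) auto


section \<open>Evaluation points and the automorphisms\<close>

definition pt :: "nat \<Rightarrow> int \<Rightarrow> (nat \<Rightarrow> int) \<Rightarrow> nat \<Rightarrow> 'k::comm_ring_1" where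
  "pt p pm l j = (if lam p pm j j = -1 then of_int (l j mod 2) else of_int (l j))"

lemma lam_cases: "pm = 1 \<or> pm = -1 \<Longrightarrow> lam p pm j j = 1 \<or> lam p pm j j = -1"
  by (auto simp: lam_def par_def)

lemma mod2_minus1: "((x::int) - 1) mod 2 = 1 - x mod 2"
  by (cases "x mod 2 = 0") (auto simp: mod_diff_eq[symmetric] dest: odd_iff_mod_2_eq_one[THEN iffD2] )

lemma mod2_plus1: "((x::int) + 1) mod 2 = 1 - x mod 2"
  by (cases "x mod 2 = 0") (auto simp: mod_add_eq[symmetric] dest: odd_iff_mod_2_eq_one[THEN iffD2] )

lemma mod2_plus1': "(1 + (x::int)) mod 2 = 1 - x mod 2"
  using mod2_plus1[of x] by (simp add: add.commute)

lemma ev_tau: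
  assumes "pm = 1 \<or> pm = -1"
  shows "ev (pt p pm l) (tau p pm j r) = ev (pt p pm (l(j := l j - 1))) (r :: 'k::comm_ring_1 pol)"
  unfolding tau_def ev_psubst
proof (rule arg_cong[where f="\<lambda>P. ev P r"], rule ext)
  fix v
  show "ev (pt p pm l) (if v = j then of_int (lam p pm j j) * (var j - 1) else var v) =
        (pt p pm (l(j := l j - 1)) v :: 'k)"
    using lam_cases[OF assms, of p j]
    by (auto simp: ev_mult ev_diff pt_def mod2_minus1 algebra_simps)
qed

lemma ev_tau_inv:
  assumes "pm = 1 \<or> pm = -1"
  shows "ev (pt p pm l) (tau_inv p pm j r) = ev (pt p pm (l(j := l j + 1))) (r :: 'k::comm_ring_1 pol)"
  unfolding tau_inv_def ev_psubst
proof (rule arg_cong[where f="\<lambda>P. ev P r"], rule ext)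
  fix v
  show "ev (pt p pm l) (if v = j then of_int (lam p pm j j) * var j + 1 else var v) =
        (pt p pm (l(j := l j + 1)) v :: 'k)"
    using lam_cases[OF assms, of p j]
    by (auto simp: ev_mult ev_add ev_diff pt_def mod2_plus1 mod2_plus1' algebra_simps)
qed

lemma ev_tau_funpow:
  assumes "pm = 1 \<or> pm = -1"
  shows "ev (pt p pm l) ((tau p pm j ^^ n) r) = ev (pt p pm (l(j := l j - int n))) (r :: 'k::comm_ring_1 pol)"
proof (induction n arbitrary: l)
  case 0 then show ?case by simp
next
  case (Suc n)
  have "ev (pt p pm l) ((tau p pm j ^^ Suc n) r) = ev (pt p pm (l(j := l j - 1))) ((tau p pm j ^^ n) r)"
    by (simp add: ev_tau[OF assms])
  also have "\<dots> = ev (pt p pm ((l(j := l j - 1))(j := (l(j := l j - 1)) j - int n))) r"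
    by (rule Suc)
  also have "(l(j := l j - 1))(j := (l(j := l j - 1)) j - int n) = l(j := l j - int (Suc n))"
    by auto
  finally show ?case .
qed

lemma ev_tau_inv_funpow:
  assumes "pm = 1 \<or> pm = -1"
  shows "ev (pt p pm l) ((tau_inv p pm j ^^ n) r) = ev (pt p pm (l(j := l j + int n))) (r :: 'k::comm_ring_1 pol)"
proof (induction n arbitrary: l)
  case 0 then show ?case by simp
next
  case (Suc n)
  have "ev (pt p pm l) ((tau_inv p pm j ^^ Suc n) r) = ev (pt p pm (l(j := l j + 1))) ((tau_inv p pm j ^^ n) r)"
    by (simp add: ev_tau_inv[OF assms])
  also have "\<dots> = ev (pt p pm ((l(j := l j + 1))(j := (l(j := l j + 1)) j + int n))) r"
    by (rule Suc)
  also have "(l(j := l j + 1))(j := (l(j := l j + 1)) j + int n) = l(j := l j + int (Suc n))"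
    by auto
  finally show ?case .
qed

lemma ev_tau_pow:
  assumes "pm = 1 \<or> pm = -1"
  shows "ev (pt p pm l) (tau_pow p pm j k r) = ev (pt p pm (l(j := l j - k))) (r :: 'k::comm_ring_1 pol)"
  by (simp add: tau_pow_def ev_tau_funpow[OF assms] ev_tau_inv_funpow[OF assms])

lemma ev_foldr_tau:
  assumes "pm = 1 \<or> pm = -1" "distinct L"
  shows "ev (pt p pm l) (foldr (\<lambda>j f. tau_pow p pm j (c j) \<circ> f) L id r)
       = ev (pt p pm (\<lambda>v. if v \<in> set L then l v - c v else l v)) (r :: 'k::comm_ring_1 pol)"
  using assms(2)
proof (induction L arbitrary: l)
  case Nil then show ?case by simp
next
  case (Cons j L)
  have "ev (pt p pm l) (foldr (\<lambda>j f. tau_pow p pm j (c j) \<circ> f) (j # L) id r)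
      = ev (pt p pm (l(j := l j - c j))) (foldr (\<lambda>j f. tau_pow p pm j (c j) \<circ> f) L id r)"
    by (simp add: ev_tau_pow[OF assms(1)])
  also have "\<dots> = ev (pt p pm (\<lambda>v. if v \<in> set L then (l(j := l j - c j)) v - c v else (l(j := l j - c j)) v)) r"
    using Cons.IH[of "l(j := l j - c j)"] Cons.prems by (simp add: o_def id_def fun_upd_def)
  also have "(\<lambda>v. if v \<in> set L then (l(j := l j - c j)) v - c v else (l(j := l j - c j)) v)
      = (\<lambda>v. if v \<in> set (j # L) then l v - c v else l v)"
    using Cons.prems by auto
  finally show ?case .
qed

definition gsh :: "nat \<Rightarrow> (nat \<Rightarrow> nat \<Rightarrow> int) \<Rightarrow> nat \<Rightarrow> nat \<Rightarrow> int" where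
  "gsh n \<gamma> i = (\<lambda>v. if v \<in> {1..n} then \<gamma> v i else 0)"

lemma ev_sigma:
  assumes "pm = 1 \<or> pm = -1"
  shows "ev (pt p pm l) (sigma p q pm \<gamma> i r) = ev (pt p pm (l - gsh (p+q) \<gamma> i)) (r :: 'k::comm_ring_1 pol)"
proof -
  have "(\<lambda>v. if v \<in> set [1..<p+q+1] then l v - \<gamma> v i else l v) = l - gsh (p+q) \<gamma> i"
    by (auto simp: gsh_def fun_eq_iff)
  then show ?thesis
    unfolding sigma_def using ev_foldr_tau[OF assms, where L="[1..<p+q+1]" and l=l and c="\<lambda>j. \<gamma> j i" and r=r] by simp
qed

lemma ev_sigma_inv:
  assumes "pm = 1 \<or> pm = -1"
  shows "ev (pt p pm l) (sigma_inv p q pm \<gamma> i r) = ev (pt p pm (l + gsh (p+q) \<gamma> i)) (r :: 'k::comm_ring_1 pol)"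
proof -
  have "(\<lambda>v. if v \<in> set [1..<p+q+1] then l v - - \<gamma> v i else l v) = l + gsh (p+q) \<gamma> i"
    by (auto simp: gsh_def fun_eq_iff)
  then show ?thesis
    unfolding sigma_inv_def using ev_foldr_tau[OF assms, where L="[1..<p+q+1]" and l=l and c="\<lambda>j. - \<gamma> j i" and r=r] by simp
qed


type_synonym st = "(nat \<Rightarrow> int) \<times> (nat \<Rightarrow> int)"

definition sq :: "'k::alg_closed_field \<Rightarrow> 'k" where
  "sq y = (SOME r. r ^ 2 = y)"

lemma sq_sq: "sq y ^ 2 = (y::'k::alg_closed_field)"
  unfolding sq_def by (rule someI_ex) (rule nth_root_exists, simp)

lemma sq_zero [simp]: "sq (0::'k::alg_closed_field) = 0"
  using sq_sq[of "0::'k"] by simp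

definition sg :: "int \<Rightarrow> 'k::comm_ring_1" where
  "sg x = (-1) ^ nat (x mod 2)"

lemma sg_add: "sg (x + y) = (sg x * sg y :: 'k::comm_ring_1)"
proof -
  have "x mod 2 = 0 \<or> x mod 2 = 1" "y mod 2 = 0 \<or> y mod 2 = 1" by auto
  moreover have "(x + y) mod 2 = (x mod 2 + y mod 2) mod 2" by (simp add: mod_add_eq)
  ultimately show ?thesis unfolding sg_def by auto
qed

lemma sg_sq: "sg x * sg x = (1::'k::comm_ring_1)"
proof -
  have "x mod 2 = 0 \<or> x mod 2 = 1" by auto
  then show ?thesis unfolding sg_def by auto
qed

lemma sg_uminus: "sg (- x) = (sg x :: 'k::comm_ring_1)"
proof -
  have "x mod 2 = 0 \<or> x mod 2 = 1" by auto
  moreover have "(- x) mod 2 = (- (x mod 2)) mod 2" by (simp add: mod_minus_eq)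
  ultimately show ?thesis unfolding sg_def by auto
qed

definition dsym :: "nat \<Rightarrow> (nat \<Rightarrow> nat \<Rightarrow> int) \<Rightarrow> gsym \<Rightarrow> st" where
  "dsym n \<gamma> x = (case x of GX i \<Rightarrow> (gsh n \<gamma> i, \<lambda>k. if k = i then 1 else 0)
                          | GY i \<Rightarrow> - (gsh n \<gamma> i, \<lambda>k. if k = i then 1 else 0))"

definition wsh :: "nat \<Rightarrow> (nat \<Rightarrow> nat \<Rightarrow> int) \<Rightarrow> gsym list \<Rightarrow> st" where
  "wsh n \<gamma> w = sum_list (map (dsym n \<gamma>) w)"

lemma wsh_Nil [simp]: "wsh n \<gamma> [] = 0" by (simp add: wsh_def)
lemma wsh_Cons [simp]: "wsh n \<gamma> (x # w) = dsym n \<gamma> x + wsh n \<gamma> w" by (simp add: wsh_def)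
lemma wsh_append [simp]: "wsh n \<gamma> (w @ v) = wsh n \<gamma> w + wsh n \<gamma> v" by (simp add: wsh_def)

definition evs :: "nat \<Rightarrow> int \<Rightarrow> st \<Rightarrow> 'k::comm_ring_1 pol \<Rightarrow> 'k" where
  "evs p pm s r = ev (pt p pm (fst s)) r"

lemma evs_ssig:
  assumes "pm = 1 \<or> pm = -1"
  shows "evs p pm s (ssig p q pm \<gamma> x r) = evs p pm (s - dsym (p+q) \<gamma> x) r"
  by (cases x) (simp_all add: evs_def dsym_def ev_sigma[OF assms] ev_sigma_inv[OF assms])

lemma evs_sigw:
  assumes "pm = 1 \<or> pm = -1"
  shows "evs p pm s (sigw p q pm \<gamma> w r) = evs p pm (s - wsh (p+q) \<gamma> w) r"
  by (induction w arbitrary: s) (simp_all add: evs_ssig[OF assms] algebra_simps)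

fun wk :: "(nat \<Rightarrow> st \<Rightarrow> 'k::comm_ring_1) \<Rightarrow> nat \<Rightarrow> (nat \<Rightarrow> nat \<Rightarrow> int) \<Rightarrow> gsym list \<Rightarrow> st \<Rightarrow> 'k" where
  "wk al n \<gamma> [] s = 1"
| "wk al n \<gamma> (GX i # w) s = al i s * wk al n \<gamma> w (s - dsym n \<gamma> (GX i))"
| "wk al n \<gamma> (GY i # w) s = al i (s - dsym n \<gamma> (GY i)) * wk al n \<gamma> w (s - dsym n \<gamma> (GY i))"

lemma wk_Cons: "wk al n \<gamma> (x # w) s = wk al n \<gamma> [x] s * wk al n \<gamma> w (s - dsym n \<gamma> x)"
  by (cases x) simp_all

lemma wk_append: "wk al n \<gamma> (w @ v) s = wk al n \<gamma> w s * wk al n \<gamma> v (s - wsh n \<gamma> w)"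
proof (induction w arbitrary: s)
  case Nil then show ?case by simp
next
  case (Cons x w)
  have "wk al n \<gamma> (x # (w @ v)) s = wk al n \<gamma> [x] s * wk al n \<gamma> (w @ v) (s - dsym n \<gamma> x)"
    by (rule wk_Cons)
  also have "\<dots> = wk al n \<gamma> [x] s * (wk al n \<gamma> w (s - dsym n \<gamma> x) * wk al n \<gamma> v (s - dsym n \<gamma> x - wsh n \<gamma> w))"
    using Cons by simp
  also have "\<dots> = wk al n \<gamma> (x # w) s * wk al n \<gamma> v (s - wsh n \<gamma> (x # w))"
    by (subst wk_Cons[of _ _ _ x w]) (simp add: algebra_simps)
  finally show ?case by simp
qed

definition rho :: "nat \<Rightarrow> int \<Rightarrow> (nat \<Rightarrow> st \<Rightarrow> 'k::comm_ring_1) \<Rightarrow> nat \<Rightarrow> (nat \<Rightarrow> nat \<Rightarrow> int)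
     \<Rightarrow> 'k tgw \<Rightarrow> (st \<Rightarrow> 'k) \<Rightarrow> st \<Rightarrow> 'k" where
  "rho p pm al n \<gamma> x f s = lin (\<lambda>w c. evs p pm s c * wk al n \<gamma> w s * f (s - wsh n \<gamma> w)) x"

lemma rho_add: "rho p pm al n \<gamma> (x + y) f s = rho p pm al n \<gamma> x f s + rho p pm al n \<gamma> y f s"
  unfolding rho_def by (rule lin_add) (auto simp: evs_def ev_add algebra_simps)

lemma rho_diff: "rho p pm al n \<gamma> (x - y) f s = rho p pm al n \<gamma> x f s - rho p pm al n \<gamma> y f s"
  unfolding rho_def by (rule lin_diff) (auto simp: evs_def ev_add algebra_simps)

lemma rho_sum: "rho p pm al n \<gamma> (\<Sum>i\<in>I. x i) f s = (\<Sum>i\<in>I. rho p pm al n \<gamma> (x i) f s)"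
  unfolding rho_def by (rule lin_sum) (auto simp: evs_def ev_add algebra_simps)

lemma rho_zero [simp]: "rho p pm al n \<gamma> 0 f s = 0"
  by (simp add: rho_def)

lemma rho_single: "rho p pm al n \<gamma> (Poly_Mapping.single w c) f s = evs p pm s c * wk al n \<gamma> w s * f (s - wsh n \<gamma> w)"
  unfolding rho_def by (rule lin_single) (auto simp: evs_def)

lemma rho_def2: "rho p pm al n \<gamma> x f s = (\<Sum>w\<in>Poly_Mapping.keys x. rho p pm al n \<gamma> (Poly_Mapping.single w (Poly_Mapping.lookup x w)) f s)"
  unfolding rho_single by (simp add: rho_def lin_def)

lemma rho_hom:
  assumes "pm = 1 \<or> pm = -1"
  shows "rho p pm al (p+q) \<gamma> (gmult p q pm \<gamma> x y) f s = rho p pm al (p+q) \<gamma> x (rho p pm al (p+q) \<gamma> y f) s"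
proof -
  let ?n = "p+q"
  have "rho p pm al ?n \<gamma> (gmult p q pm \<gamma> x y) f s =
     (\<Sum>w\<in>Poly_Mapping.keys x. \<Sum>v\<in>Poly_Mapping.keys y.
        evs p pm s (Poly_Mapping.lookup x w) * wk al ?n \<gamma> w s *
        (evs p pm (s - wsh ?n \<gamma> w) (Poly_Mapping.lookup y v) * wk al ?n \<gamma> v (s - wsh ?n \<gamma> w)
          * f (s - wsh ?n \<gamma> w - wsh ?n \<gamma> v)))"
    unfolding gmult_def rho_sum rho_single
    by (intro sum.cong refl)
       (simp add: evs_def ev_mult wk_append evs_sigw[OF assms, unfolded evs_def] algebra_simps)
  also have "\<dots> = rho p pm al ?n \<gamma> x (rho p pm al ?n \<gamma> y f) s"
    by (simp add: rho_def lin_def sum_distrib_left algebra_simps)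
  finally show ?thesis .
qed


section \<open>The weights\<close>

definition ptv :: "nat \<Rightarrow> int \<Rightarrow> nat \<Rightarrow> int \<Rightarrow> 'k::comm_ring_1" where
  "ptv p pm k y = (if lam p pm k k = -1 then of_int (y mod 2) else of_int y)"

lemma pt_ptv: "pt p pm l k = ptv p pm k (l k)"
  by (simp add: pt_def ptv_def)

definition Ab :: "nat \<Rightarrow> int \<Rightarrow> nat \<Rightarrow> int \<Rightarrow> int \<Rightarrow> 'k::alg_closed_field" where
  "Ab p pm k c y = (if c > 0 then (\<Prod>l\<in>{0..<nat c}. sq (ptv p pm k y + of_nat l))
                   else if c < 0 then (\<Prod>l\<in>{1..nat (- c)}. sq (ptv p pm k y - of_nat l))
                   else 1)"

lemma Ab_sq:
  "Ab p pm k (\<gamma> k i) (l k) ^ 2 = ev (pt p pm l) (uji \<gamma> k i :: 'k::alg_closed_field pol)"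
  by (simp add: Ab_def uji_def ev_prod ev_add ev_diff pt_ptv prod_power_distrib sq_sq)

definition PI :: "int \<Rightarrow> int \<Rightarrow> 'k::alg_closed_field" where
  "PI a b = (\<Prod>t\<in>{a..<b}. sq (of_int t))"

lemma PI_concat: "a \<le> b \<Longrightarrow> b \<le> c \<Longrightarrow> PI a b * PI b c = (PI a c :: 'k::alg_closed_field)"
  unfolding PI_def by (subst prod.union_disjoint[symmetric]) (auto simp: ivl_disj_un)

lemma Ab_poly_pos:
  assumes "lam p pm k k \<noteq> -1" "c \<ge> 0"
  shows "Ab p pm k c y = (PI y (y + c) :: 'k::alg_closed_field)"
proof (cases "c = 0")
  case True then show ?thesis by (simp add: Ab_def PI_def)
next
  case False
  have "Ab p pm k c y = (\<Prod>l\<in>{0..<nat c}. sq (of_int (int l + y)) :: 'k)"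
    using assms False by (simp add: Ab_def ptv_def add.commute)
  also have "\<dots> = (\<Prod>t\<in>(\<lambda>l. int l + y) ` {0..<nat c}. sq (of_int t))"
    by (subst prod.reindex) (auto simp: inj_on_def)
  also have "(\<lambda>l. int l + y) ` {0..<nat c} = {y..<y+c}"
  proof -
    have "(\<lambda>l. int l + y) ` {0..<nat c} = (\<lambda>x. x + y) ` (int ` {0..<nat c})"
      by (simp add: image_image)
    also have "int ` {0..<nat c} = {0..<c}" using assms by (simp add: image_int_atLeastLessThan)
    also have "(\<lambda>x. x + y) ` {0..<c} = {y..<y+c}"
      using image_add_int_atLeastLessThan[of "y+c" y] by (simp add: add.commute)
    finally show ?thesis .
  qed
  finally show ?thesis by (simp add: PI_def)
qed

lemma Ab_poly_neg:
  assumes "lam p pm k k \<noteq> -1" "c < 0"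
  shows "Ab p pm k c y = (PI (y + c) y :: 'k::alg_closed_field)"
proof -
  have "Ab p pm k c y = (\<Prod>l\<in>{1..nat (-c)}. sq (of_int (y - int l)) :: 'k)"
    using assms by (simp add: Ab_def ptv_def)
  also have "\<dots> = (\<Prod>t\<in>(\<lambda>l. y - int l) ` {1..nat (-c)}. sq (of_int t))"
    by (subst prod.reindex) (auto simp: inj_on_def)
  also have "(\<lambda>l. y - int l) ` {1..nat (-c)} = {y+c..<y}"
  proof (rule set_eqI, rule iffI)
    fix t assume "t \<in> (\<lambda>l. y - int l) ` {1..nat (-c)}"
    then show "t \<in> {y+c..<y}" using assms by auto
  next
    fix t assume t: "t \<in> {y+c..<y}"
    then have "t = y - int (nat (y - t))" "nat (y - t) \<in> {1..nat (-c)}" by auto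
    then show "t \<in> (\<lambda>l. y - int l) ` {1..nat (-c)}" by blast
  qed
  finally show ?thesis by (simp add: PI_def)
qed

lemma Ab_zero [simp]: "Ab p pm k 0 y = 1"
  by (simp add: Ab_def)

lemma Ab_comm_poly:
  assumes "lam p pm k k \<noteq> -1" "a * b \<le> 0"
  shows "Ab p pm k a (x - a) * Ab p pm k b (x - a) = (Ab p pm k b x * Ab p pm k a (x + b - a) :: 'k::alg_closed_field)"
proof -
  consider "a = 0" | "b = 0" | "a > 0" "b < 0" | "a < 0" "b > 0"
    using assms(2) by (metis linorder_neqE_linordered_idom mult_pos_pos mult_neg_neg not_le)
  then show ?thesis
  proof cases
    case 1 then show ?thesis by simp
  next
    case 2 then show ?thesis by simp
  next
    case 3
    have "Ab p pm k a (x - a) * Ab p pm k b (x - a) = (PI (x - a) x * PI (x - a + b) (x - a) :: 'k)"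
      using 3 assms by (simp add: Ab_poly_pos Ab_poly_neg)
    also have "\<dots> = PI (x - a + b) x" using 3 PI_concat[of "x-a+b" "x-a" x] by (simp add: mult.commute)
    also have "\<dots> = PI (x + b - a) (x + b) * PI (x + b) x"
    proof -
      have "x - a + b = x + b - a" by simp
      moreover have "PI (x + b - a) (x + b) * PI (x + b) x = (PI (x + b - a) x :: 'k)"
        using 3 by (intro PI_concat) auto
      ultimately show ?thesis by metis
    qed
    also have "\<dots> = PI (x + b) x * PI (x + b - a) (x + b)" by (simp add: mult.commute)
    also have "\<dots> = Ab p pm k b x * Ab p pm k a (x + b - a)"
      using 3 assms by (simp add: Ab_poly_pos Ab_poly_neg)
    finally show ?thesis .
  next
    case 4
    have "Ab p pm k a (x - a) * Ab p pm k b (x - a) = (PI (x - a + a) (x - a) * PI (x - a) (x - a + b) :: 'k)"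
      using 4 assms by (simp add: Ab_poly_pos Ab_poly_neg)
    also have "\<dots> = PI x (x - a + b)" using 4 PI_concat[of x "x-a" "x-a+b"] by simp
    also have "\<dots> = PI x (x + b) * PI (x + b) (x + b - a)"
    proof -
      have "x - a + b = x + b - a" by simp
      moreover have "PI x (x + b) * PI (x + b) (x + b - a) = (PI x (x + b - a) :: 'k)"
        using 4 by (intro PI_concat) auto
      ultimately show ?thesis by metis
    qed
    also have "\<dots> = Ab p pm k b x * Ab p pm k a (x + b - a)"
      using 4 assms by (simp add: Ab_poly_pos Ab_poly_neg)
    finally show ?thesis .
  qed
qed

lemma ptv_bool_mod: "lam p pm k k = -1 \<Longrightarrow> y mod 2 = y' mod 2 \<Longrightarrow> ptv p pm k y = ptv p pm k y'"
  by (simp add: ptv_def)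

lemma Ab_bool_1: "lam p pm k k = -1 \<Longrightarrow> Ab p pm k 1 y = sq (ptv p pm k y)"
  by (simp add: Ab_def)

lemma Ab_bool_m1: "lam p pm k k = -1 \<Longrightarrow> Ab p pm k (-1) y = sq (ptv p pm k y - 1)"
  by (simp add: Ab_def)

lemma Ab_bool_prod0:
  assumes "lam p pm k k = -1"
  shows "Ab p pm k 1 y * Ab p pm k (-1) y = (0 :: 'k::{alg_closed_field})"
proof -
  have "y mod 2 = 0 \<or> y mod 2 = 1" by auto
  then show ?thesis using assms by (auto simp: Ab_bool_1 Ab_bool_m1 ptv_def)
qed

lemma Ab_bool_zero:
  assumes "lam p pm k k = -1" "a * b < 0" "\<bar>a\<bar> \<le> 1" "\<bar>b\<bar> \<le> 1"
  shows "Ab p pm k a (x - a) * Ab p pm k b (x - a) = (0 :: 'k::alg_closed_field)"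
    and "Ab p pm k b x * Ab p pm k a (x + b - a) = (0 :: 'k::alg_closed_field)"
proof -
  have ab: "(a = 1 \<and> b = -1) \<or> (a = -1 \<and> b = 1)"
    using assms(2-4) by (auto simp: abs_le_iff mult_less_0_iff)
  have e1: "Ab p pm k c (y + 2) = (Ab p pm k c y :: 'k)" for c y
  proof -
    have "ptv p pm k (y+2) = (ptv p pm k y :: 'k)" by (rule ptv_bool_mod[OF assms(1)]) simp
    then show ?thesis by (simp add: Ab_def)
  qed
  show "Ab p pm k a (x - a) * Ab p pm k b (x - a) = (0 :: 'k)"
    using ab Ab_bool_prod0[OF assms(1)] by (auto simp: mult.commute)
  from ab show "Ab p pm k b x * Ab p pm k a (x + b - a) = (0 :: 'k)"
  proof
    assume h: "a = 1 \<and> b = -1"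
    have "Ab p pm k 1 (x - 2) = (Ab p pm k 1 x :: 'k)" using e1[of 1 "x - 2"] by simp
    then show ?thesis using h Ab_bool_prod0[OF assms(1), of x] by (simp add: mult.commute)
  next
    assume h: "a = -1 \<and> b = 1"
    have "Ab p pm k (-1) (x + 2) = (Ab p pm k (-1) x :: 'k)" using e1[of "-1" x] by simp
    then show ?thesis using h Ab_bool_prod0[OF assms(1), of x] by (simp add: add.commute)
  qed
qed

lemma Ab_comm_bool:
  assumes "lam p pm k k = -1" "a * b \<le> 0" "\<bar>a\<bar> \<le> 1" "\<bar>b\<bar> \<le> 1"
  shows "Ab p pm k a (x - a) * Ab p pm k b (x - a) = (Ab p pm k b x * Ab p pm k a (x + b - a) :: 'k::alg_closed_field)"
proof (cases "a * b = 0")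
  case True then show ?thesis by auto
next
  case False
  have "a * b < 0" using assms(2) False by linarith
  have "Ab p pm k a (x - a) * Ab p pm k b (x - a) = (0 :: 'k)"
    by (rule Ab_bool_zero(1)[OF assms(1) \<open>a * b < 0\<close> assms(3,4)])
  moreover have "Ab p pm k b x * Ab p pm k a (x + b - a) = (0 :: 'k)"
    by (rule Ab_bool_zero(2)[OF assms(1) \<open>a * b < 0\<close> assms(3,4)])
  ultimately show ?thesis by metis
qed


lemma sg_diff: "sg (x - y) = (sg x * sg y :: 'k::comm_ring_1)"
proof -
  have "sg (x + - y) = (sg x * sg (- y) :: 'k)" by (rule sg_add)
  then show ?thesis by (simp add: sg_uminus)
qed

definition muint :: "nat \<Rightarrow> nat \<Rightarrow> int \<Rightarrow> (nat \<Rightarrow> nat \<Rightarrow> int) \<Rightarrow> nat \<Rightarrow> nat \<Rightarrow> int" where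
  "muint p q pm \<gamma> i j = (- pm) ^ nat (pprime p q \<gamma> i * pprime p q \<gamma> j)
                        * (-1) ^ nat (pbar p q \<gamma> i * pbar p q \<gamma> j)"

lemma mu_muint: "mu p q pm \<gamma> i j = of_int (muint p q pm \<gamma> i j)"
  by (simp add: mu_def muint_def)

lemma muint_sym: "muint p q pm \<gamma> i j = muint p q pm \<gamma> j i"
  by (simp add: muint_def mult.commute)

lemma muint_pm1: "pm = 1 \<or> pm = -1 \<Longrightarrow> muint p q pm \<gamma> i j = 1 \<or> muint p q pm \<gamma> i j = -1"
  unfolding muint_def by (auto simp: power_minus' minus_one_power_iff)

definition qq :: "nat \<Rightarrow> nat \<Rightarrow> int \<Rightarrow> (nat \<Rightarrow> nat \<Rightarrow> int) \<Rightarrow> nat \<Rightarrow> nat \<Rightarrow> int" where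
  "qq p q pm \<gamma> i j = (if muint p q pm \<gamma> i j = 1 then 0 else 1)"

lemma qq_sym: "qq p q pm \<gamma> i j = qq p q pm \<gamma> j i"
  by (simp add: qq_def muint_sym)

lemma sg_qq: "pm = 1 \<or> pm = -1 \<Longrightarrow> sg (qq p q pm \<gamma> i j) = (of_int (muint p q pm \<gamma> i j) :: 'k::comm_ring_1)"
  using muint_pm1[of pm p q \<gamma> i j] by (auto simp: qq_def sg_def)

definition EE :: "nat \<Rightarrow> nat \<Rightarrow> int \<Rightarrow> (nat \<Rightarrow> nat \<Rightarrow> int) \<Rightarrow> nat \<Rightarrow> (nat \<Rightarrow> int) \<Rightarrow> int" where
  "EE p q pm \<gamma> i z = (\<Sum>i'\<in>{1..<i}. qq p q pm \<gamma> i i' * z i')"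

lemma EE_add: "EE p q pm \<gamma> i (z + w) = EE p q pm \<gamma> i z + EE p q pm \<gamma> i w"
  by (simp add: EE_def sum.distrib algebra_simps)

lemma EE_uminus: "EE p q pm \<gamma> i (- z) = - EE p q pm \<gamma> i z"
  by (simp add: EE_def sum_negf)

lemma EE_diff: "EE p q pm \<gamma> i (z - w) = EE p q pm \<gamma> i z - EE p q pm \<gamma> i w"
  using EE_add[of p q pm \<gamma> i z "- w"] EE_uminus[of p q pm \<gamma> i w] by simp

lemma EE_e: "EE p q pm \<gamma> i (\<lambda>k. if k = j then 1 else 0) = (if j \<in> {1..<i} then qq p q pm \<gamma> i j else 0)"
  by (auto simp: EE_def if_distrib cong: if_cong)

lemma gsh_in: "k \<in> {1..n} \<Longrightarrow> gsh n \<gamma> i k = \<gamma> k i"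
  by (simp add: gsh_def)

definition al :: "nat \<Rightarrow> nat \<Rightarrow> int \<Rightarrow> (nat \<Rightarrow> nat \<Rightarrow> int) \<Rightarrow> nat \<Rightarrow> st \<Rightarrow> 'k::alg_closed_field" where
  "al p q pm \<gamma> i s = sg (EE p q pm \<gamma> i (snd s)) *
      (\<Prod>k\<in>{1..p+q}. Ab p pm k (\<gamma> k i) (fst s k - \<gamma> k i))"

lemma dsym_GX: "dsym n \<gamma> (GX i) = (gsh n \<gamma> i, \<lambda>k. if k = i then 1 else 0)"
  by (simp add: dsym_def)
lemma dsym_GY: "dsym n \<gamma> (GY i) = - (gsh n \<gamma> i, \<lambda>k. if k = i then 1 else 0)"
  by (simp add: dsym_def)

lemma al_shift_sq:
  "al p q pm \<gamma> i (s + dsym (p+q) \<gamma> (GX i)) ^ 2 = (evs p pm s (tt p q \<gamma> i) :: 'k::alg_closed_field)"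
proof -
  have h: "al p q pm \<gamma> i (s + dsym (p+q) \<gamma> (GX i)) =
        sg (EE p q pm \<gamma> i (snd s + (\<lambda>k. if k = i then 1 else 0))) *
        (\<Prod>k\<in>{1..p+q}. Ab p pm k (\<gamma> k i) (fst s k))"
    by (simp add: al_def dsym_GX gsh_def)
  have "al p q pm \<gamma> i (s + dsym (p+q) \<gamma> (GX i)) ^ 2 =
        sg (EE p q pm \<gamma> i (snd s + (\<lambda>k. if k = i then 1 else 0))) ^ 2 *
        (\<Prod>k\<in>{1..p+q}. Ab p pm k (\<gamma> k i) (fst s k) ^ 2)"
    unfolding h by (simp add: power_mult_distrib prod_power_distrib)
  also have "\<dots> = (\<Prod>k\<in>{1..p+q}. ev (pt p pm (fst s)) (uji \<gamma> k i))"
    by (simp add: power2_eq_square[of "sg _"] sg_sq Ab_sq)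
  also have "\<dots> = evs p pm s (tt p q \<gamma> i)"
    by (simp add: evs_def tt_def ev_prod)
  finally show ?thesis .
qed

lemma al_comm:
  assumes sign: "pm = 1 \<or> pm = -1"
    and condI: "\<forall>j\<in>{1..p+q}. \<forall>i\<in>{1..m}. lam p pm j j = -1 \<longrightarrow> \<bar>\<gamma> j i\<bar> \<le> 1"
    and condII: "\<forall>i\<in>{1..m}. \<forall>i'\<in>{1..m}. i \<noteq> i' \<longrightarrow>
        ((\<exists>k\<in>{1..p+q}. lam p pm k k = -1 \<and> \<gamma> k i * \<gamma> k i' < 0)
         \<or> (\<forall>k\<in>{1..p+q}. \<gamma> k i * \<gamma> k i' \<le> 0))"
    and ij: "i \<in> {1..m}" "j \<in> {1..m}" "i \<noteq> j"
  shows "al p q pm \<gamma> i s * al p q pm \<gamma> j (s - dsym (p+q) \<gamma> (GX i) + dsym (p+q) \<gamma> (GX j))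
       = (of_int (muint p q pm \<gamma> i j) * (al p q pm \<gamma> j (s + dsym (p+q) \<gamma> (GX j)) * al p q pm \<gamma> i (s + dsym (p+q) \<gamma> (GX j))) :: 'k::alg_closed_field)"
proof -
  let ?n = "p+q"
  let ?ei = "\<lambda>k. if k = i then 1 else (0::int)"
  let ?ej = "\<lambda>k. if k = j then 1 else (0::int)"
  define z where "z = snd s"
  define x where "x = fst s"
  let ?E = "EE p q pm \<gamma>"
  let ?L = "\<lambda>k. Ab p pm k (\<gamma> k i) (x k - \<gamma> k i) * Ab p pm k (\<gamma> k j) (x k - \<gamma> k i) :: 'k"
  let ?R = "\<lambda>k. Ab p pm k (\<gamma> k j) (x k) * Ab p pm k (\<gamma> k i) (x k + \<gamma> k j - \<gamma> k i) :: 'k"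
  have sx: "s = (x, z)" by (simp add: x_def z_def)
  have Lside: "al p q pm \<gamma> i s * al p q pm \<gamma> j (s - dsym ?n \<gamma> (GX i) + dsym ?n \<gamma> (GX j))
      = (sg (?E i z) * sg (?E j z - (if i \<in> {1..<j} then qq p q pm \<gamma> j i else 0))) * (\<Prod>k\<in>{1..?n}. ?L k)"
  proof -
    have st: "s - dsym ?n \<gamma> (GX i) + dsym ?n \<gamma> (GX j) = (x - gsh ?n \<gamma> i + gsh ?n \<gamma> j, z - ?ei + ?ej)"
      by (simp add: sx dsym_GX)
    have e: "?E j (z - ?ei + ?ej) = ?E j z - (if i \<in> {1..<j} then qq p q pm \<gamma> j i else 0)"
      by (simp add: EE_add EE_diff EE_e)
    have aj: "al p q pm \<gamma> j (s - dsym ?n \<gamma> (GX i) + dsym ?n \<gamma> (GX j)) =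
       sg (?E j z - (if i \<in> {1..<j} then qq p q pm \<gamma> j i else 0)) *
       (\<Prod>k\<in>{1..?n}. Ab p pm k (\<gamma> k j) (x k - \<gamma> k i) :: 'k)"
      unfolding st al_def fst_conv snd_conv e
      by (rule arg_cong[where f="\<lambda>t. sg _ * t"], rule prod.cong) (auto simp: gsh_def)
    have ai: "al p q pm \<gamma> i s = sg (?E i z) * (\<Prod>k\<in>{1..?n}. Ab p pm k (\<gamma> k i) (x k - \<gamma> k i) :: 'k)"
      by (simp add: al_def x_def z_def)
    have "al p q pm \<gamma> i s * al p q pm \<gamma> j (s - dsym ?n \<gamma> (GX i) + dsym ?n \<gamma> (GX j))
       = (sg (?E i z) * (\<Prod>k\<in>{1..?n}. Ab p pm k (\<gamma> k i) (x k - \<gamma> k i))) *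
         (sg (?E j z - (if i \<in> {1..<j} then qq p q pm \<gamma> j i else 0)) * (\<Prod>k\<in>{1..?n}. Ab p pm k (\<gamma> k j) (x k - \<gamma> k i)) :: 'k)"
      unfolding ai aj ..
    also have "\<dots> = (sg (?E i z) * sg (?E j z - (if i \<in> {1..<j} then qq p q pm \<gamma> j i else 0))) * (\<Prod>k\<in>{1..?n}. ?L k)"
      by (simp add: prod.distrib algebra_simps)
    finally show ?thesis .
  qed
  have Rside: "al p q pm \<gamma> j (s + dsym ?n \<gamma> (GX j)) * al p q pm \<gamma> i (s + dsym ?n \<gamma> (GX j))
      = (sg (?E j z) * sg (?E i z + (if j \<in> {1..<i} then qq p q pm \<gamma> i j else 0))) * (\<Prod>k\<in>{1..?n}. ?R k)"
  proof -
    have st: "s + dsym ?n \<gamma> (GX j) = (x + gsh ?n \<gamma> j, z + ?ej)"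
      by (simp add: sx dsym_GX)
    have e1: "?E j (z + ?ej) = ?E j z" by (simp add: EE_add EE_e)
    have e2: "?E i (z + ?ej) = ?E i z + (if j \<in> {1..<i} then qq p q pm \<gamma> i j else 0)"
      by (simp add: EE_add EE_e)
    have aj: "al p q pm \<gamma> j (s + dsym ?n \<gamma> (GX j)) =
       sg (?E j z) * (\<Prod>k\<in>{1..?n}. Ab p pm k (\<gamma> k j) (x k) :: 'k)"
      unfolding st al_def fst_conv snd_conv e1
      by (rule arg_cong[where f="\<lambda>t. sg _ * t"], rule prod.cong) (auto simp: gsh_def)
    have ai: "al p q pm \<gamma> i (s + dsym ?n \<gamma> (GX j)) =
       sg (?E i z + (if j \<in> {1..<i} then qq p q pm \<gamma> i j else 0)) *
       (\<Prod>k\<in>{1..?n}. Ab p pm k (\<gamma> k i) (x k + \<gamma> k j - \<gamma> k i) :: 'k)"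
      unfolding st al_def fst_conv snd_conv e2
      by (rule arg_cong[where f="\<lambda>t. sg _ * t"], rule prod.cong) (auto simp: gsh_def)
    have "al p q pm \<gamma> j (s + dsym ?n \<gamma> (GX j)) * al p q pm \<gamma> i (s + dsym ?n \<gamma> (GX j))
       = (sg (?E j z) * (\<Prod>k\<in>{1..?n}. Ab p pm k (\<gamma> k j) (x k))) *
         (sg (?E i z + (if j \<in> {1..<i} then qq p q pm \<gamma> i j else 0)) * (\<Prod>k\<in>{1..?n}. Ab p pm k (\<gamma> k i) (x k + \<gamma> k j - \<gamma> k i)) :: 'k)"
      unfolding ai aj ..
    also have "\<dots> = (sg (?E j z) * sg (?E i z + (if j \<in> {1..<i} then qq p q pm \<gamma> i j else 0))) * (\<Prod>k\<in>{1..?n}. ?R k)"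
      by (simp add: prod.distrib algebra_simps)
    finally show ?thesis .
  qed
  have mm: "of_int (muint p q pm \<gamma> i j) * of_int (muint p q pm \<gamma> i j) = (1::'k)"
    using muint_pm1[OF sign, of p q \<gamma> i j] by auto
  have signs: "sg (?E i z) * sg (?E j z - (if i \<in> {1..<j} then qq p q pm \<gamma> j i else 0))
     = (of_int (muint p q pm \<gamma> i j) * (sg (?E j z) * sg (?E i z + (if j \<in> {1..<i} then qq p q pm \<gamma> i j else 0))) :: 'k)"
  proof (cases "i < j")
    case True
    then have m: "i \<in> {1..<j}" "j \<notin> {1..<i}" using ij by auto
    have "sg (?E j z - qq p q pm \<gamma> j i) = (sg (?E j z) * of_int (muint p q pm \<gamma> i j) :: 'k)"
      by (simp only: sg_diff qq_sym[of p q pm \<gamma> j i] sg_qq[OF sign])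
    then show ?thesis using m by (simp add: mult_ac)
  next
    case False
    then have m: "i \<notin> {1..<j}" "j \<in> {1..<i}" using ij by auto
    have e: "sg (?E i z + qq p q pm \<gamma> i j) = (sg (?E i z) * of_int (muint p q pm \<gamma> i j) :: 'k)"
      by (simp only: sg_add sg_qq[OF sign])
    have "of_int (muint p q pm \<gamma> i j) * (sg (?E j z) * (sg (?E i z) * of_int (muint p q pm \<gamma> i j)))
       = (of_int (muint p q pm \<gamma> i j) * of_int (muint p q pm \<gamma> i j)) * (sg (?E i z) * sg (?E j z) :: 'k)"
      by (simp only: mult_ac)
    then show ?thesis using m e mm by simp
  qed
  have prods: "(\<Prod>k\<in>{1..?n}. ?L k) = (\<Prod>k\<in>{1..?n}. ?R k)"
  proof -
    from condII ij consider (z) k0 where "k0 \<in> {1..?n}" "lam p pm k0 k0 = -1" "\<gamma> k0 i * \<gamma> k0 j < 0"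
      | (c) "\<forall>k\<in>{1..?n}. \<gamma> k i * \<gamma> k j \<le> 0" by blast
    then show ?thesis
    proof cases
      case z
      have "\<bar>\<gamma> k0 i\<bar> \<le> 1" "\<bar>\<gamma> k0 j\<bar> \<le> 1" using condI z ij by auto
      then have "?L k0 = 0" "?R k0 = 0" using Ab_bool_zero[OF z(2) z(3)] by auto
      then have "(\<Prod>k\<in>{1..?n}. ?L k) = (0::'k)" "(\<Prod>k\<in>{1..?n}. ?R k) = (0::'k)"
        using z(1) by (auto intro!: prod_zero)
      then show ?thesis by (simp del: prod_zero_iff)
    next
      case c
      show ?thesis
      proof (rule prod.cong[OF refl])
        fix k assume k: "k \<in> {1..?n}"
        show "?L k = ?R k"
        proof (cases "lam p pm k k = -1")
          case True
          have "\<bar>\<gamma> k i\<bar> \<le> 1" "\<bar>\<gamma> k j\<bar> \<le> 1" using condI True k ij by auto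
          then show ?thesis using Ab_comm_bool[OF True, of "\<gamma> k i" "\<gamma> k j" "x k"] c k by auto
        next
          case False
          then show ?thesis using Ab_comm_poly[OF False, of "\<gamma> k i" "\<gamma> k j" "x k"] c k by auto
        qed
      qed
    qed
  qed
  have fin: "\<And>A B S1 S2 P P' c. A = S1 * P \<Longrightarrow> B = S2 * P' \<Longrightarrow> S1 = c * S2 \<Longrightarrow> P = P' \<Longrightarrow> A = c * (B::'k)"
    by simp
  show ?thesis by (rule fin[OF Lside Rside signs prods])
qed


definition pin :: "nat \<Rightarrow> 'k::comm_ring_1 pol \<Rightarrow> bool" where
  "pin n r \<longleftrightarrow> (\<forall>mon\<in>Poly_Mapping.keys r. Poly_Mapping.keys mon \<subseteq> {1..n})"

lemma pin_zero [simp]: "pin n 0" by (simp add: pin_def)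

lemma pin_add: "pin n r \<Longrightarrow> pin n s \<Longrightarrow> pin n (r + s)"
  using keys_add[of r s] by (auto simp: pin_def)

lemma pin_uminus: "pin n r \<Longrightarrow> pin n (- r)"
  by (simp add: pin_def keys_def)

lemma pin_diff: "pin n r \<Longrightarrow> pin n s \<Longrightarrow> pin n (r - s)"
  using pin_add[of n r "- s"] pin_uminus[of n s] by simp

lemma pin_mult: "pin n r \<Longrightarrow> pin n s \<Longrightarrow> pin n (r * s)"
  unfolding pin_def
proof
  fix mon assume r: "\<forall>mon\<in>Poly_Mapping.keys r. Poly_Mapping.keys mon \<subseteq> {1..n}"
    and s: "\<forall>mon\<in>Poly_Mapping.keys s. Poly_Mapping.keys mon \<subseteq> {1..n}"
    and mon: "mon \<in> Poly_Mapping.keys (r * s)"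
  then obtain a b where "mon = a + b" "a \<in> Poly_Mapping.keys r" "b \<in> Poly_Mapping.keys s"
    using keys_mult[of r s] by blast
  then show "Poly_Mapping.keys mon \<subseteq> {1..n}" using r s keys_add[of a b] by blast
qed

lemma pin_sum: "(\<And>i. i \<in> I \<Longrightarrow> pin n (r i)) \<Longrightarrow> pin n (\<Sum>i\<in>I. r i)"
  by (induction I rule: infinite_finite_induct) (auto intro: pin_add)

lemma pin_pc [simp]: "pin n (pc c)" by (simp add: pin_def pc_def)

lemma pin_one [simp]: "pin n 1" using pin_pc[of n 1] by (simp add: pc_def)

lemma pin_prod: "(\<And>i. i \<in> I \<Longrightarrow> pin n (r i)) \<Longrightarrow> pin n (\<Prod>i\<in>I. r i)"
  by (induction I rule: infinite_finite_induct) (auto intro: pin_mult)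

lemma pin_power: "pin n r \<Longrightarrow> pin n (r ^ e)"
  by (induction e) (auto intro: pin_mult)

lemma pin_var: "j \<in> {1..n} \<Longrightarrow> pin n (var j)" by (simp add: pin_def var_def)

lemma pin_of_int [simp]: "pin n (of_int c)" using pin_pc[of n "of_int c"] by (simp add: pc_def)
lemma pin_of_nat [simp]: "pin n (of_nat c)" using pin_pc[of n "of_nat c"] by (simp add: pc_def)

lemma pin_psubst:
  assumes "pin n r" "\<And>v. v \<in> {1..n} \<Longrightarrow> pin n (\<phi> v)"
  shows "pin n (psubst \<phi> r)"
  unfolding psubst_def using assms
  by (intro pin_sum pin_mult pin_pc pin_prod pin_power assms(2)) (use assms(1) in \<open>unfold pin_def, blast\<close>)+

lemma pin_tau: "j \<in> {1..n} \<Longrightarrow> pin n r \<Longrightarrow> pin n (tau p pm j r)"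
  unfolding tau_def by (rule pin_psubst) (auto intro!: pin_mult pin_diff pin_var)

lemma pin_tau_inv: "j \<in> {1..n} \<Longrightarrow> pin n r \<Longrightarrow> pin n (tau_inv p pm j r)"
  unfolding tau_inv_def by (rule pin_psubst) (auto intro!: pin_mult pin_add pin_var)

lemma pin_funpow:
  fixes f :: "'k::comm_ring_1 pol \<Rightarrow> 'k pol"
  assumes "\<And>r. pin n r \<Longrightarrow> pin n (f r)" "pin n r"
  shows "pin n ((f ^^ k) r)"
proof (induction k)
  case 0 then show ?case using assms(2) by simp
next
  case (Suc k) then show ?case using assms(1) by simp
qed

lemma pin_tau_pow: "j \<in> {1..n} \<Longrightarrow> pin n r \<Longrightarrow> pin n (tau_pow p pm j k r)"
  unfolding tau_pow_def by (auto intro!: pin_funpow pin_tau pin_tau_inv)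

lemma pin_foldr: "set L \<subseteq> {1..n} \<Longrightarrow> pin n r \<Longrightarrow> pin n (foldr (\<lambda>j f. tau_pow p pm j (c j) \<circ> f) L id r)"
  by (induction L arbitrary: r) (auto intro: pin_tau_pow)

lemma pin_sigma: "pin (p+q) r \<Longrightarrow> pin (p+q) (sigma p q pm \<gamma> i r)"
  unfolding sigma_def by (rule pin_foldr) auto

lemma pin_sigma_inv: "pin (p+q) r \<Longrightarrow> pin (p+q) (sigma_inv p q pm \<gamma> i r)"
  unfolding sigma_inv_def by (rule pin_foldr) auto

lemma pin_sigw: "pin (p+q) r \<Longrightarrow> pin (p+q) (sigw p q pm \<gamma> w r)"
proof (induction w arbitrary: r)
  case Nil then show ?case by simp
next
  case (Cons x w) then show ?case by (cases x) (auto intro: pin_sigma pin_sigma_inv)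
qed

definition widx :: "nat \<Rightarrow> gsym list \<Rightarrow> bool" where
  "widx m w \<longleftrightarrow> (\<forall>s\<in>set w. sidx s \<in> {1..m})"

lemma widx_append [simp]: "widx m (w @ v) \<longleftrightarrow> widx m w \<and> widx m v"
  by (auto simp: widx_def)
lemma widx_Cons [simp]: "widx m (x # v) \<longleftrightarrow> sidx x \<in> {1..m} \<and> widx m v"
  by (auto simp: widx_def)
lemma widx_Nil [simp]: "widx m []" by (simp add: widx_def)

lemma Fcar_iff: "f \<in> Fcar n m \<longleftrightarrow> (\<forall>w. pin n (Poly_Mapping.lookup f w) \<and>
     (Poly_Mapping.lookup f w \<noteq> 0 \<longrightarrow> widx m w))"
proof
  assume f: "f \<in> Fcar n m"
  show "\<forall>w. pin n (Poly_Mapping.lookup f w) \<and> (Poly_Mapping.lookup f w \<noteq> 0 \<longrightarrow> widx m w)"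
  proof
    fix w show "pin n (Poly_Mapping.lookup f w) \<and> (Poly_Mapping.lookup f w \<noteq> 0 \<longrightarrow> widx m w)"
    proof (cases "Poly_Mapping.lookup f w = 0")
      case True then show ?thesis by simp
    next
      case False then have "w \<in> Poly_Mapping.keys f" by (simp add: in_keys_iff)
      then show ?thesis using f unfolding Fcar_def pin_def widx_def by blast
    qed
  qed
next
  assume h: "\<forall>w. pin n (Poly_Mapping.lookup f w) \<and> (Poly_Mapping.lookup f w \<noteq> 0 \<longrightarrow> widx m w)"
  show "f \<in> Fcar n m"
    unfolding Fcar_def using h unfolding pin_def widx_def in_keys_iff[symmetric] by blast
qed

lemma Fcar_zero [simp]: "0 \<in> Fcar n m" by (simp add: Fcar_iff)

lemma Fcar_single: "widx m w \<Longrightarrow> pin n c \<Longrightarrow> Poly_Mapping.single w c \<in> Fcar n m"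
  by (auto simp: Fcar_iff lookup_single when_def)

lemma Fcar_add: "f \<in> Fcar n m \<Longrightarrow> g \<in> Fcar n m \<Longrightarrow> f + g \<in> Fcar n m"
  unfolding Fcar_iff lookup_add by (metis add.left_neutral add.right_neutral pin_add)

lemma Fcar_uminus: "f \<in> Fcar n m \<Longrightarrow> - f \<in> Fcar n m"
  by (auto simp: Fcar_iff intro: pin_uminus)

lemma Fcar_diff: "f \<in> Fcar n m \<Longrightarrow> g \<in> Fcar n m \<Longrightarrow> f - g \<in> Fcar n m"
  using Fcar_add[of f n m "- g"] Fcar_uminus[of g n m] by simp

lemma Fcar_sum: "(\<And>i. i \<in> I \<Longrightarrow> f i \<in> Fcar n m) \<Longrightarrow> (\<Sum>i\<in>I. f i) \<in> Fcar n m"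
  by (induction I rule: infinite_finite_induct) (auto intro: Fcar_add)

lemma Fcar_keys: "f \<in> Fcar n m \<Longrightarrow> w \<in> Poly_Mapping.keys f \<Longrightarrow> widx m w \<and> pin n (Poly_Mapping.lookup f w)"
  by (auto simp: Fcar_iff in_keys_iff)

lemma gmult_Fcar: "f \<in> Fcar (p+q) m \<Longrightarrow> g \<in> Fcar (p+q) m \<Longrightarrow> gmult p q pm \<gamma> f g \<in> Fcar (p+q) m"
  unfolding gmult_def
  by (intro Fcar_sum Fcar_single) (auto dest: Fcar_keys intro!: pin_mult pin_sigw)

section \<open>Ideals\<close>

lemma is_idealI:
  "J \<subseteq> Fcar (p+q) m \<Longrightarrow> 0 \<in> J \<Longrightarrow> (\<forall>a\<in>J. \<forall>b\<in>J. a - b \<in> J) \<Longrightarrow>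
   (\<forall>a\<in>J. \<forall>c\<in>Fcar (p+q) m. gmult p q pm \<gamma> c a \<in> J \<and> gmult p q pm \<gamma> a c \<in> J) \<Longrightarrow>
   is_ideal p q pm \<gamma> m J"
  by (simp add: is_ideal_def)

lemma is_ideal_sub: "is_ideal p q pm \<gamma> m J \<Longrightarrow> J \<subseteq> Fcar (p+q) m"
  by (simp add: is_ideal_def)
lemma is_ideal_zero: "is_ideal p q pm \<gamma> m J \<Longrightarrow> 0 \<in> J"
  by (simp add: is_ideal_def)
lemma is_ideal_diff: "is_ideal p q pm \<gamma> m J \<Longrightarrow> a \<in> J \<Longrightarrow> b \<in> J \<Longrightarrow> a - b \<in> J"
  by (simp add: is_ideal_def)
lemma is_ideal_multL: "is_ideal p q pm \<gamma> m J \<Longrightarrow> a \<in> J \<Longrightarrow> c \<in> Fcar (p+q) m \<Longrightarrow> gmult p q pm \<gamma> c a \<in> J"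
  by (simp add: is_ideal_def)
lemma is_ideal_multR: "is_ideal p q pm \<gamma> m J \<Longrightarrow> a \<in> J \<Longrightarrow> c \<in> Fcar (p+q) m \<Longrightarrow> gmult p q pm \<gamma> a c \<in> J"
  by (simp add: is_ideal_def)

lemma Fcar_ideal: "is_ideal p q pm \<gamma> m (Fcar (p+q) m)"
  unfolding is_ideal_def by (intro conjI ballI subset_refl Fcar_zero Fcar_diff gmult_Fcar)

lemma gen_ideal_ideal:
  fixes S :: "'k::comm_ring_1 tgw set"
  assumes "S \<subseteq> Fcar (p+q) m"
  shows "is_ideal p q pm \<gamma> m (gen_ideal p q pm \<gamma> m S)"
proof -
  let ?F = "{J. is_ideal p q pm \<gamma> m J \<and> S \<subseteq> J}"
  have F: "Fcar (p+q) m \<in> ?F" using assms Fcar_ideal by simp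
  have sub: "\<Inter>?F \<subseteq> Fcar (p+q) m" using F by blast
  have z: "0 \<in> \<Inter>?F" by (auto simp: is_ideal_def)
  have d: "\<forall>a\<in>\<Inter>?F. \<forall>b\<in>\<Inter>?F. a - b \<in> \<Inter>?F"
  proof (intro ballI InterI)
    fix a b :: "'k tgw" and J assume "a \<in> \<Inter>?F" "b \<in> \<Inter>?F" "J \<in> ?F"
    then have "a \<in> J" "b \<in> J" "is_ideal p q pm \<gamma> m J" by auto
    then show "a - b \<in> J" unfolding is_ideal_def by blast
  qed
  have mu: "\<forall>a\<in>\<Inter>?F. \<forall>c\<in>Fcar (p+q) m. gmult p q pm \<gamma> c a \<in> \<Inter>?F \<and> gmult p q pm \<gamma> a c \<in> \<Inter>?F"
  proof (intro ballI conjI InterI)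
    fix a c :: "'k tgw" and J assume "a \<in> \<Inter>?F" "c \<in> Fcar (p+q) m" "J \<in> ?F"
    then have "a \<in> J" "c \<in> Fcar (p+q) m" "is_ideal p q pm \<gamma> m J" by auto
    then show "gmult p q pm \<gamma> c a \<in> J" unfolding is_ideal_def by blast
  next
    fix a c :: "'k tgw" and J assume "a \<in> \<Inter>?F" "c \<in> Fcar (p+q) m" "J \<in> ?F"
    then have "a \<in> J" "c \<in> Fcar (p+q) m" "is_ideal p q pm \<gamma> m J" by auto
    then show "gmult p q pm \<gamma> a c \<in> J" unfolding is_ideal_def by blast
  qed
  show ?thesis unfolding gen_ideal_def by (rule is_idealI[OF sub z d mu])
qed

lemma gen_ideal_least:
  "is_ideal p q pm \<gamma> m J \<Longrightarrow> S \<subseteq> J \<Longrightarrow> gen_ideal p q pm \<gamma> m S \<subseteq> J"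
  unfolding gen_ideal_def by blast

lemma gen_ideal_sub: "S \<subseteq> Fcar (p+q) m \<Longrightarrow> S \<subseteq> gen_ideal p q pm \<gamma> m S"
  unfolding gen_ideal_def by blast

lemma pin_uji: "j \<in> {1..n} \<Longrightarrow> pin n (uji \<gamma> j i)"
  by (auto simp: uji_def intro!: pin_prod pin_add pin_diff pin_var)

lemma pin_tt: "pin (p+q) (tt p q \<gamma> i)"
  unfolding tt_def by (intro pin_prod pin_uji) auto

lemma rels_Fcar: "(rels p q pm \<gamma> m :: 'k::comm_ring_1 tgw set) \<subseteq> Fcar (p+q) m"
  unfolding rels_def
proof (intro Un_least subsetI)
  fix x :: "'k tgw" assume "x \<in> {Poly_Mapping.single [] (var j ^ 2 - var j) | j. j \<in> {1..p+q} \<and> lam p pm j j = -1}"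
  then obtain j where "x = Poly_Mapping.single [] (var j ^ 2 - var j)" "j \<in> {1..p+q}" by blast
  then show "x \<in> Fcar (p+q) m" by (auto intro!: Fcar_single pin_diff pin_power pin_var)
next
  fix x :: "'k tgw" assume "x \<in> {Poly_Mapping.single [GY i, GX i] 1 - Poly_Mapping.single [] (tt p q \<gamma> i) | i. i \<in> {1..m}}"
  then obtain i where "x = Poly_Mapping.single [GY i, GX i] 1 - Poly_Mapping.single [] (tt p q \<gamma> i)" "i \<in> {1..m}" by blast
  then show "x \<in> Fcar (p+q) m" by (auto intro!: Fcar_diff Fcar_single pin_tt)
next
  fix x :: "'k tgw" assume "x \<in> {Poly_Mapping.single [GX i, GY i] 1 - Poly_Mapping.single [] (sigma p q pm \<gamma> i (tt p q \<gamma> i)) | i. i \<in> {1..m}}"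
  then obtain i where "x = Poly_Mapping.single [GX i, GY i] 1 - Poly_Mapping.single [] (sigma p q pm \<gamma> i (tt p q \<gamma> i))" "i \<in> {1..m}" by blast
  then show "x \<in> Fcar (p+q) m" by (auto intro!: Fcar_diff Fcar_single pin_tt pin_sigma)
next
  fix x :: "'k tgw" assume "x \<in> {Poly_Mapping.single [GX i, GY j] 1 - Poly_Mapping.single [GY j, GX i] (pc (mu p q pm \<gamma> i j))
        | i j. i \<in> {1..m} \<and> j \<in> {1..m} \<and> i \<noteq> j}"
  then obtain i j where "x = Poly_Mapping.single [GX i, GY j] 1 - Poly_Mapping.single [GY j, GX i] (pc (mu p q pm \<gamma> i j))"
     "i \<in> {1..m}" "j \<in> {1..m}" by blast
  then show "x \<in> Fcar (p+q) m" by (auto intro!: Fcar_diff Fcar_single)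
qed

lemma Irel_ideal: "is_ideal p q pm \<gamma> m (Irel p q pm \<gamma> m)"
  unfolding Irel_def by (rule gen_ideal_ideal[OF rels_Fcar])

lemma Irel_Fcar: "(Irel p q pm \<gamma> m :: 'k::comm_ring_1 tgw set) \<subseteq> Fcar (p+q) m"
  by (rule is_ideal_sub[OF Irel_ideal])

lemma rels_Irel: "rels p q pm \<gamma> m \<subseteq> Irel p q pm \<gamma> m"
  unfolding Irel_def by (rule gen_ideal_sub[OF rels_Fcar])


abbreviation rhoA :: "nat \<Rightarrow> nat \<Rightarrow> int \<Rightarrow> (nat \<Rightarrow> nat \<Rightarrow> int) \<Rightarrow> 'k::alg_closed_field tgw \<Rightarrow> (st \<Rightarrow> 'k) \<Rightarrow> st \<Rightarrow> 'k" where
  "rhoA p q pm \<gamma> \<equiv> rho p pm (al p q pm \<gamma>) (p+q) \<gamma>"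

lemma rho_zero_f: "rho p pm A n \<gamma> x (\<lambda>_. 0) s = 0"
  by (simp add: rho_def lin_def)

lemma dsym_GY': "dsym n \<gamma> (GY i) = - dsym n \<gamma> (GX i)"
  by (simp add: dsym_def)

definition KJ :: "nat \<Rightarrow> nat \<Rightarrow> int \<Rightarrow> (nat \<Rightarrow> nat \<Rightarrow> int) \<Rightarrow> nat \<Rightarrow> 'k::alg_closed_field tgw set" where
  "KJ p q pm \<gamma> m = {x \<in> Fcar (p+q) m. \<forall>f s. rhoA p q pm \<gamma> x f s = 0}"

lemma KJ_ideal:
  assumes sign: "pm = 1 \<or> pm = -1"
  shows "is_ideal p q pm \<gamma> m (KJ p q pm \<gamma> m :: 'k::alg_closed_field tgw set)"
proof (rule is_idealI)
  show "KJ p q pm \<gamma> m \<subseteq> Fcar (p + q) m" by (auto simp: KJ_def)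
  show "(0::'k tgw) \<in> KJ p q pm \<gamma> m" by (simp add: KJ_def)
  show "\<forall>a\<in>KJ p q pm \<gamma> m. \<forall>b\<in>KJ p q pm \<gamma> m. a - b \<in> (KJ p q pm \<gamma> m :: 'k tgw set)"
    by (auto simp: KJ_def rho_diff intro: Fcar_diff)
  show "\<forall>a\<in>KJ p q pm \<gamma> m. \<forall>c\<in>Fcar (p + q) m.
      gmult p q pm \<gamma> c a \<in> (KJ p q pm \<gamma> m :: 'k tgw set) \<and> gmult p q pm \<gamma> a c \<in> KJ p q pm \<gamma> m"
  proof (intro ballI conjI)
    fix a c :: "'k tgw" assume a: "a \<in> KJ p q pm \<gamma> m" and c: "c \<in> Fcar (p + q) m"
    then have aF: "a \<in> Fcar (p+q) m" and a0: "\<And>f s. rhoA p q pm \<gamma> a f s = 0" by (auto simp: KJ_def)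
    have "rhoA p q pm \<gamma> (gmult p q pm \<gamma> c a) f s = 0" for f s
    proof -
      have "rhoA p q pm \<gamma> a f = (\<lambda>_. 0)" using a0 by auto
      then show ?thesis by (simp add: rho_hom[OF sign] rho_zero_f)
    qed
    then show "gmult p q pm \<gamma> c a \<in> KJ p q pm \<gamma> m" using aF c by (auto simp: KJ_def gmult_Fcar)
    have "rhoA p q pm \<gamma> (gmult p q pm \<gamma> a c) f s = 0" for f s
      by (simp add: rho_hom[OF sign] a0)
    then show "gmult p q pm \<gamma> a c \<in> KJ p q pm \<gamma> m" using aF c by (auto simp: KJ_def gmult_Fcar)
  qed
qed

lemma evs_one [simp]: "evs p pm s 1 = 1" by (simp add: evs_def)

lemma rels_KJ:
  assumes sign: "pm = 1 \<or> pm = -1"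
    and condI: "\<forall>j\<in>{1..p+q}. \<forall>i\<in>{1..m}. lam p pm j j = -1 \<longrightarrow> \<bar>\<gamma> j i\<bar> \<le> 1"
    and condII: "\<forall>i\<in>{1..m}. \<forall>i'\<in>{1..m}. i \<noteq> i' \<longrightarrow>
        ((\<exists>k\<in>{1..p+q}. lam p pm k k = -1 \<and> \<gamma> k i * \<gamma> k i' < 0)
         \<or> (\<forall>k\<in>{1..p+q}. \<gamma> k i * \<gamma> k i' \<le> 0))"
  shows "(rels p q pm \<gamma> m :: 'k::alg_closed_field tgw set) \<subseteq> KJ p q pm \<gamma> m"
proof
  fix x :: "'k tgw" assume x: "x \<in> rels p q pm \<gamma> m"
  then have xF: "x \<in> Fcar (p+q) m" using rels_Fcar by blast
  have "rhoA p q pm \<gamma> x f s = 0" for f s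
  proof -
    let ?d = "\<lambda>i. dsym (p+q) \<gamma> (GX i)"
    from x consider
        (r1) j where "x = Poly_Mapping.single [] (var j ^ 2 - var j)" "lam p pm j j = -1"
      | (r2) i where "x = Poly_Mapping.single [GY i, GX i] 1 - Poly_Mapping.single [] (tt p q \<gamma> i)"
      | (r3) i where "x = Poly_Mapping.single [GX i, GY i] 1 - Poly_Mapping.single [] (sigma p q pm \<gamma> i (tt p q \<gamma> i))"
      | (r4) i j where "x = Poly_Mapping.single [GX i, GY j] 1 - Poly_Mapping.single [GY j, GX i] (pc (mu p q pm \<gamma> i j))"
            "i \<in> {1..m}" "j \<in> {1..m}" "i \<noteq> j"
      unfolding rels_def by blast
    then show ?thesis
    proof cases
      case r1
      have "fst s j mod 2 = 0 \<or> fst s j mod 2 = 1" by auto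
      then have "evs p pm s (var j ^ 2 - var j) = (0::'k)"
        using r1(2) by (auto simp: evs_def ev_diff ev_power pt_def)
      then show ?thesis by (simp add: r1(1) rho_single)
    next
      case r2
      have "wk (al p q pm \<gamma>) (p+q) \<gamma> [GY i, GX i] s = (al p q pm \<gamma> i (s + ?d i) ^ 2 :: 'k)"
        by (simp add: dsym_GY' power2_eq_square)
      then show ?thesis
        by (simp add: r2 rho_diff rho_single dsym_GY' al_shift_sq)
    next
      case r3
      have "wk (al p q pm \<gamma>) (p+q) \<gamma> [GX i, GY i] s = (al p q pm \<gamma> i ((s - ?d i) + ?d i) ^ 2 :: 'k)"
        by (simp add: dsym_GY' power2_eq_square)
      also have "\<dots> = evs p pm (s - ?d i) (tt p q \<gamma> i)" by (rule al_shift_sq)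
      also have "\<dots> = evs p pm s (sigma p q pm \<gamma> i (tt p q \<gamma> i))"
        by (simp add: evs_def dsym_GX ev_sigma[OF sign])
      finally show ?thesis
        by (simp add: r3 rho_diff rho_single dsym_GY')
    next
      case r4
      have "wk (al p q pm \<gamma>) (p+q) \<gamma> [GX i, GY j] s = (al p q pm \<gamma> i s * al p q pm \<gamma> j (s - ?d i + ?d j) :: 'k)"
        by (simp add: dsym_GY')
      also have "\<dots> = of_int (muint p q pm \<gamma> i j) * (al p q pm \<gamma> j (s + ?d j) * al p q pm \<gamma> i (s + ?d j))"
        by (rule al_comm[OF sign condI condII r4(2-4)])
      also have "al p q pm \<gamma> j (s + ?d j) * al p q pm \<gamma> i (s + ?d j) = wk (al p q pm \<gamma>) (p+q) \<gamma> [GY j, GX i] s"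
        by (simp add: dsym_GY')
      finally have w: "wk (al p q pm \<gamma>) (p+q) \<gamma> [GX i, GY j] s =
           (of_int (muint p q pm \<gamma> i j) * wk (al p q pm \<gamma>) (p+q) \<gamma> [GY j, GX i] s :: 'k)" .
      have ws: "wsh (p+q) \<gamma> [GX i, GY j] = wsh (p+q) \<gamma> [GY j, GX i]" by (simp add: add.commute)
      have "rhoA p q pm \<gamma> x f s = evs p pm s 1 * wk (al p q pm \<gamma>) (p+q) \<gamma> [GX i, GY j] s * f (s - wsh (p+q) \<gamma> [GX i, GY j])
         - evs p pm s (pc (mu p q pm \<gamma> i j)) * wk (al p q pm \<gamma>) (p+q) \<gamma> [GY j, GX i] s * f (s - wsh (p+q) \<gamma> [GY j, GX i])"
        by (simp only: r4(1) rho_diff rho_single)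
      then show ?thesis
        by (simp only: w ws evs_one) (simp add: evs_def mu_muint)
    qed
  qed
  then show "x \<in> KJ p q pm \<gamma> m" using xF by (simp add: KJ_def)
qed

lemma Irel_KJ:
  assumes sign: "pm = 1 \<or> pm = -1"
    and condI: "\<forall>j\<in>{1..p+q}. \<forall>i\<in>{1..m}. lam p pm j j = -1 \<longrightarrow> \<bar>\<gamma> j i\<bar> \<le> 1"
    and condII: "\<forall>i\<in>{1..m}. \<forall>i'\<in>{1..m}. i \<noteq> i' \<longrightarrow>
        ((\<exists>k\<in>{1..p+q}. lam p pm k k = -1 \<and> \<gamma> k i * \<gamma> k i' < 0)
         \<or> (\<forall>k\<in>{1..p+q}. \<gamma> k i * \<gamma> k i' \<le> 0))"
  shows "(Irel p q pm \<gamma> m :: 'k::alg_closed_field tgw set) \<subseteq> KJ p q pm \<gamma> m"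
  unfolding Irel_def by (rule gen_ideal_least[OF KJ_ideal[OF sign] rels_KJ[OF sign condI condII]])


lemma pc_add: "pc (a + b) = pc a + (pc b :: 'k::comm_ring_1 pol)"
  by (simp add: pc_def single_add)

lemma pc_mult: "pc (a * b) = pc a * (pc b :: 'k::comm_ring_1 pol)"
  by (simp add: pc_def mult_single)

lemma pc_zero [simp]: "pc 0 = (0 :: 'k::comm_ring_1 pol)" by (simp add: pc_def)
lemma pc_one [simp]: "pc 1 = (1 :: 'k::comm_ring_1 pol)" by (simp add: pc_def)

lemma psubst_add: "psubst \<phi> (r + s) = psubst \<phi> r + psubst \<phi> (s :: 'k::comm_ring_1 pol)"
proof -
  have "psubst \<phi> r = lin (\<lambda>mon c. pc c * (\<Prod>v\<in>Poly_Mapping.keys mon. \<phi> v ^ Poly_Mapping.lookup mon v)) r" for r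
    by (simp add: psubst_def lin_def)
  moreover have "lin (\<lambda>mon c. pc c * (\<Prod>v\<in>Poly_Mapping.keys mon. \<phi> v ^ Poly_Mapping.lookup mon v)) (r + s) =
    lin (\<lambda>mon c. pc c * (\<Prod>v\<in>Poly_Mapping.keys mon. \<phi> v ^ Poly_Mapping.lookup mon v)) r +
    lin (\<lambda>mon c. pc c * (\<Prod>v\<in>Poly_Mapping.keys mon. \<phi> v ^ Poly_Mapping.lookup mon v)) s"
    by (rule lin_add) (simp_all add: pc_add distrib_right)
  ultimately show ?thesis by simp
qed

lemma psubst_pc: "psubst \<phi> (pc c) = (pc c :: 'k::comm_ring_1 pol)"
  by (cases "c = 0") (simp_all add: psubst_def pc_def)

lemma psubst_one: "psubst \<phi> 1 = (1 :: 'k::comm_ring_1 pol)"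
  using psubst_pc[of \<phi> 1] by simp


lemma tau_pc: "tau p pm j (pc c) = (pc c :: 'k::comm_ring_1 pol)"
  by (simp add: tau_def psubst_pc)
lemma tau_inv_pc: "tau_inv p pm j (pc c) = (pc c :: 'k::comm_ring_1 pol)"
  by (simp add: tau_inv_def psubst_pc)

lemma tau_pow_pc: "tau_pow p pm j k (pc c) = (pc c :: 'k::comm_ring_1 pol)"
proof -
  have "((tau p pm j) ^^ n) (pc c) = (pc c :: 'k pol)" for n
    by (induction n) (simp_all add: tau_pc)
  moreover have "((tau_inv p pm j) ^^ n) (pc c) = (pc c :: 'k pol)" for n
    by (induction n) (simp_all add: tau_inv_pc)
  ultimately show ?thesis by (simp add: tau_pow_def)
qed

lemma foldr_tau_pc: "foldr (\<lambda>j f. tau_pow p pm j (c j) \<circ> f) L id (pc a) = (pc a :: 'k::comm_ring_1 pol)"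
  by (induction L) (simp_all add: tau_pow_pc)

lemma sigw_pc: "sigw p q pm \<gamma> w (pc c) = (pc c :: 'k::comm_ring_1 pol)"
proof (induction w)
  case Nil then show ?case by simp
next
  case (Cons x w) then show ?case
    by (cases x) (simp_all add: sigma_def sigma_inv_def foldr_tau_pc)
qed

lemma sigw_one: "sigw p q pm \<gamma> w 1 = (1 :: 'k::comm_ring_1 pol)"
  using sigw_pc[of p q pm \<gamma> w 1] by simp

lemma tau_add: "tau p pm j (r + s) = tau p pm j r + tau p pm j (s :: 'k::comm_ring_1 pol)"
  by (simp add: tau_def psubst_add)
lemma tau_inv_add: "tau_inv p pm j (r + s) = tau_inv p pm j r + tau_inv p pm j (s :: 'k::comm_ring_1 pol)"
  by (simp add: tau_inv_def psubst_add)

lemma funpow_add_hom: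
  fixes f :: "'k::comm_ring_1 pol \<Rightarrow> 'k pol"
  shows "(\<And>r s. f (r + s) = f r + f s) \<Longrightarrow> (f ^^ k) (r + s) = (f ^^ k) r + (f ^^ k) s"
  by (induction k) auto

lemma tau_pow_add: "tau_pow p pm j k (r + s) = tau_pow p pm j k r + tau_pow p pm j k (s :: 'k::comm_ring_1 pol)"
  by (simp add: tau_pow_def funpow_add_hom tau_add tau_inv_add)

lemma foldr_tau_add: "foldr (\<lambda>j f. tau_pow p pm j (c j) \<circ> f) L id (r + s) =
   foldr (\<lambda>j f. tau_pow p pm j (c j) \<circ> f) L id r + foldr (\<lambda>j f. tau_pow p pm j (c j) \<circ> f) L id (s :: 'k::comm_ring_1 pol)"
  by (induction L) (simp_all add: tau_pow_add)

lemma sigw_add: "sigw p q pm \<gamma> w (r + s) = sigw p q pm \<gamma> w r + sigw p q pm \<gamma> w (s :: 'k::comm_ring_1 pol)"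
proof (induction w)
  case Nil then show ?case by simp
next
  case (Cons x w) then show ?case
    by (cases x) (simp_all add: sigma_def sigma_inv_def foldr_tau_add)
qed

lemma sigw_zero: "sigw p q pm \<gamma> w 0 = (0 :: 'k::comm_ring_1 pol)"
  using sigw_add[of p q pm \<gamma> w 0 0] by simp

lemma gmult_lin: "gmult p q pm \<gamma> f h =
  lin (\<lambda>w c. lin (\<lambda>v d. Poly_Mapping.single (w @ v) (c * sigw p q pm \<gamma> w d)) h) f"
  by (simp add: gmult_def lin_def)

lemma lin_plus_fun:
  "lin (\<lambda>k x. G k x + H k x) p = lin G p + lin H (p :: 'a \<Rightarrow>\<^sub>0 'b::zero)"
  by (simp add: lin_def sum.distrib)

lemma gmult_add_right: "gmult p q pm \<gamma> f (g + h) = gmult p q pm \<gamma> f g + gmult p q pm \<gamma> f (h :: 'k::comm_ring_1 tgw)"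
proof -
  have "lin (\<lambda>v d. Poly_Mapping.single (w @ v) (c * sigw p q pm \<gamma> w d)) (g + h) =
        lin (\<lambda>v d. Poly_Mapping.single (w @ v) (c * sigw p q pm \<gamma> w d)) g +
        lin (\<lambda>v d. Poly_Mapping.single (w @ v) (c * sigw p q pm \<gamma> w d)) h" for w c
    by (rule lin_add) (simp_all add: sigw_zero sigw_add distrib_left single_add)
  then show ?thesis by (simp add: gmult_lin lin_plus_fun)
qed

lemma gmult_add_left: "gmult p q pm \<gamma> (f + g) h = gmult p q pm \<gamma> f h + gmult p q pm \<gamma> g (h :: 'k::comm_ring_1 tgw)"
  unfolding gmult_lin
  by (rule lin_add) (simp_all add: distrib_right single_add lin_def sum.distrib)

lemma gmult_zero_right [simp]: "gmult p q pm \<gamma> f 0 = (0 :: 'k::comm_ring_1 tgw)"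
  by (simp add: gmult_def)
lemma gmult_zero_left [simp]: "gmult p q pm \<gamma> 0 f = (0 :: 'k::comm_ring_1 tgw)"
  by (simp add: gmult_def)

lemma gmult_uminus_right: "gmult p q pm \<gamma> f (- g) = - gmult p q pm \<gamma> f (g :: 'k::comm_ring_1 tgw)"
  using gmult_add_right[of p q pm \<gamma> f "- g" g] by (simp add: eq_neg_iff_add_eq_0)
lemma gmult_uminus_left: "gmult p q pm \<gamma> (- f) g = - gmult p q pm \<gamma> f (g :: 'k::comm_ring_1 tgw)"
  using gmult_add_left[of p q pm \<gamma> "- f" f g] by (simp add: eq_neg_iff_add_eq_0)

lemma gmult_diff_right: "gmult p q pm \<gamma> f (g - h) = gmult p q pm \<gamma> f g - gmult p q pm \<gamma> f (h :: 'k::comm_ring_1 tgw)"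
  using gmult_add_right[of p q pm \<gamma> f g "- h"] by (simp add: gmult_uminus_right)
lemma gmult_diff_left: "gmult p q pm \<gamma> (f - g) h = gmult p q pm \<gamma> f h - gmult p q pm \<gamma> g (h :: 'k::comm_ring_1 tgw)"
  using gmult_add_left[of p q pm \<gamma> f "- g" h] by (simp add: gmult_uminus_left)

lemma gmult_single: "gmult p q pm \<gamma> (Poly_Mapping.single w c) (Poly_Mapping.single v d) =
   Poly_Mapping.single (w @ v) (c * sigw p q pm \<gamma> w (d :: 'k::comm_ring_1 pol))"
  by (cases "c = 0"; cases "d = 0") (simp_all add: gmult_def sigw_zero)


lemma is_ideal_add: "is_ideal p q pm \<gamma> m J \<Longrightarrow> a \<in> J \<Longrightarrow> b \<in> J \<Longrightarrow> a + (b::'k::comm_ring_1 tgw) \<in> J"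
  using is_ideal_diff[of p q pm \<gamma> m J a "0 - b"] is_ideal_diff[of p q pm \<gamma> m J 0 b] is_ideal_zero[of p q pm \<gamma> m J]
  by simp

lemma is_ideal_uminus: "is_ideal p q pm \<gamma> m J \<Longrightarrow> b \<in> J \<Longrightarrow> - (b::'k::comm_ring_1 tgw) \<in> J"
  using is_ideal_diff[of p q pm \<gamma> m J 0 b] is_ideal_zero[of p q pm \<gamma> m J] by simp

lemma is_ideal_sum: "is_ideal p q pm \<gamma> m J \<Longrightarrow> (\<And>i. i \<in> I \<Longrightarrow> f i \<in> J) \<Longrightarrow> (\<Sum>i\<in>I. f i :: 'k::comm_ring_1 tgw) \<in> J"
  by (induction I rule: infinite_finite_induct) (auto intro: is_ideal_add is_ideal_zero)

lemma rel2_mem: "i \<in> {1..m} \<Longrightarrow> Poly_Mapping.single [GY i, GX i] 1 - Poly_Mapping.single [] (tt p q \<gamma> i) \<in> rels p q pm \<gamma> m"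
  unfolding rels_def by (intro UnI1 UnI2) blast
lemma rel3_mem: "i \<in> {1..m} \<Longrightarrow> Poly_Mapping.single [GX i, GY i] 1 - Poly_Mapping.single [] (sigma p q pm \<gamma> i (tt p q \<gamma> i)) \<in> rels p q pm \<gamma> m"
  unfolding rels_def by (intro UnI1 UnI2) blast
lemma rel4_mem: "i \<in> {1..m} \<Longrightarrow> j \<in> {1..m} \<Longrightarrow> i \<noteq> j \<Longrightarrow>
   Poly_Mapping.single [GX i, GY j] 1 - Poly_Mapping.single [GY j, GX i] (pc (mu p q pm \<gamma> i j)) \<in> rels p q pm \<gamma> m"
  unfolding rels_def by (intro UnI2) blast

definition WR :: "nat \<Rightarrow> nat \<Rightarrow> int \<Rightarrow> (nat \<Rightarrow> nat \<Rightarrow> int) \<Rightarrow> nat \<Rightarrow> 'k::comm_ring_1 itself \<Rightarrow> gsym list \<Rightarrow> gsym list \<Rightarrow> bool" where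
  "WR p q pm \<gamma> m T u v \<longleftrightarrow> widx m u \<and> widx m v \<and>
     (\<forall>c::'k pol. pin (p+q) c \<longrightarrow> (\<exists>c'. pin (p+q) c' \<and>
         Poly_Mapping.single u c - Poly_Mapping.single v c' \<in> Irel p q pm \<gamma> m))"

definition swp :: "gsym \<Rightarrow> gsym \<Rightarrow> bool" where
  "swp x y \<longleftrightarrow> (\<exists>c d. x = GX c \<and> y = GY d \<and> c \<noteq> d) \<or> (\<exists>c d. x = GY d \<and> y = GX c \<and> c \<noteq> d)"

context
  fixes p q m :: nat and pm :: int and \<gamma> :: "nat \<Rightarrow> nat \<Rightarrow> int" and T :: "'k::comm_ring_1 itself"
  assumes sign: "pm = 1 \<or> pm = -1"
begin

abbreviation "WRr \<equiv> WR p q pm \<gamma> m T"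
abbreviation "Ir \<equiv> (Irel p q pm \<gamma> m :: 'k tgw set)"

lemma R_refl: "widx m u \<Longrightarrow> WRr u u"
  unfolding WR_def
proof (intro conjI allI impI)
  fix c :: "'k pol" assume "widx m u" "pin (p+q) c"
  moreover have "(0::'k tgw) \<in> Ir" by (rule is_ideal_zero[OF Irel_ideal])
  ultimately show "\<exists>c'. pin (p+q) c' \<and> Poly_Mapping.single u c - Poly_Mapping.single u c' \<in> Ir"
    by (intro exI[of _ c]) simp
qed

lemma R_trans:
  assumes "WRr u v" "WRr v w" shows "WRr u w"
  unfolding WR_def
proof (intro conjI allI impI)
  show "widx m u" "widx m w" using assms by (auto simp: WR_def)
  fix c :: "'k pol" assume c: "pin (p+q) c"
  obtain c' where c': "pin (p+q) c'" "Poly_Mapping.single u c - Poly_Mapping.single v c' \<in> Ir"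
    using assms(1) c unfolding WR_def by blast
  obtain c'' where c'': "pin (p+q) c''" "Poly_Mapping.single v c' - Poly_Mapping.single w c'' \<in> Ir"
    using assms(2) c'(1) unfolding WR_def by blast
  have "(Poly_Mapping.single u c - Poly_Mapping.single v c') + (Poly_Mapping.single v c' - Poly_Mapping.single w c'') \<in> Ir"
    by (rule is_ideal_add[OF Irel_ideal c'(2) c''(2)])
  then show "\<exists>c'. pin (p+q) c' \<and> Poly_Mapping.single u c - Poly_Mapping.single w c' \<in> Ir"
    using c''(1) by auto
qed

lemma R_ctx:
  assumes "WRr w w'" "widx m u" "widx m v"
  shows "WRr (u @ w @ v) (u @ w' @ v)"
  unfolding WR_def
proof (intro conjI allI impI)
  show "widx m (u @ w @ v)" "widx m (u @ w' @ v)" using assms by (auto simp: WR_def)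
  fix c0 :: "'k pol" assume c0: "pin (p+q) c0"
  obtain c' where c': "pin (p+q) c'" "Poly_Mapping.single w 1 - Poly_Mapping.single w' c' \<in> Ir"
    using assms(1) unfolding WR_def by force
  have uF: "Poly_Mapping.single u c0 \<in> Fcar (p+q) m" using assms(2) c0 by (rule Fcar_single)
  have vF: "Poly_Mapping.single v (1::'k pol) \<in> Fcar (p+q) m" using assms(3) by (simp add: Fcar_single)
  have "gmult p q pm \<gamma> (Poly_Mapping.single u c0)
          (gmult p q pm \<gamma> (Poly_Mapping.single w 1 - Poly_Mapping.single w' c') (Poly_Mapping.single v 1)) \<in> Ir"
    by (rule is_ideal_multL[OF Irel_ideal is_ideal_multR[OF Irel_ideal c'(2) vF] uF])
  also have "gmult p q pm \<gamma> (Poly_Mapping.single u c0)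
          (gmult p q pm \<gamma> (Poly_Mapping.single w 1 - Poly_Mapping.single w' c') (Poly_Mapping.single v 1))
     = Poly_Mapping.single (u @ w @ v) c0 - Poly_Mapping.single (u @ w' @ v) (c0 * sigw p q pm \<gamma> u c')"
    by (simp add: gmult_diff_left gmult_diff_right gmult_single sigw_one)
  finally have mem: "Poly_Mapping.single (u @ w @ v) c0 - Poly_Mapping.single (u @ w' @ v) (c0 * sigw p q pm \<gamma> u c') \<in> Ir" .
  have "pin (p+q) (c0 * sigw p q pm \<gamma> u c')" using c0 c'(1) by (simp add: pin_mult pin_sigw)
  with mem show "\<exists>c'. pin (p+q) c' \<and> Poly_Mapping.single (u @ w @ v) c0 - Poly_Mapping.single (u @ w' @ v) c' \<in> Ir"
    by blast
qed

lemma rel_in_I: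
  assumes "x \<in> (rels p q pm \<gamma> m :: 'k tgw set)" "pin (p+q) c"
  shows "gmult p q pm \<gamma> (Poly_Mapping.single [] c) x \<in> Ir"
  by (rule is_ideal_multL[OF Irel_ideal subsetD[OF rels_Irel assms(1)]]) (use assms in \<open>auto intro: Fcar_single\<close>)

lemma gmult_nil_single: "gmult p q pm \<gamma> (Poly_Mapping.single [] c) (Poly_Mapping.single v d) = Poly_Mapping.single v (c * (d :: 'k pol))"
  by (simp add: gmult_single)

lemma R_B1: assumes "i \<in> {1..m}" "j \<in> {1..m}" "i \<noteq> j" shows "WRr [GX i, GY j] [GY j, GX i]"
  unfolding WR_def
proof (intro conjI allI impI)
  show "widx m [GX i, GY j]" "widx m [GY j, GX i]" using assms by auto
  fix c :: "'k pol" assume c: "pin (p+q) c"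
  let ?r = "Poly_Mapping.single [GX i, GY j] 1 - Poly_Mapping.single [GY j, GX i] (pc (mu p q pm \<gamma> i j)) :: 'k tgw"
  have "?r \<in> rels p q pm \<gamma> m" using assms by (rule rel4_mem)
  from rel_in_I[OF this c]
  have "Poly_Mapping.single [GX i, GY j] c - Poly_Mapping.single [GY j, GX i] (c * pc (mu p q pm \<gamma> i j)) \<in> Ir"
    by (simp add: gmult_diff_right gmult_nil_single)
  moreover have "pin (p+q) (c * pc (mu p q pm \<gamma> i j))" using c by (simp add: pin_mult)
  ultimately show "\<exists>c'. pin (p+q) c' \<and> Poly_Mapping.single [GX i, GY j] c - Poly_Mapping.single [GY j, GX i] c' \<in> Ir"
    by blast
qed

lemma mu_sq: "pc (mu p q pm \<gamma> i j) * pc (mu p q pm \<gamma> i j) = (1 :: 'k pol)"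
proof -
  have "mu p q pm \<gamma> i j * mu p q pm \<gamma> i j = (1::'k)"
    using muint_pm1[OF sign, of p q \<gamma> i j] by (auto simp: mu_muint)
  then show ?thesis by (simp add: pc_mult[symmetric])
qed

lemma R_B2: assumes "i \<in> {1..m}" "j \<in> {1..m}" "i \<noteq> j" shows "WRr [GY j, GX i] [GX i, GY j]"
  unfolding WR_def
proof (intro conjI allI impI)
  show "widx m [GX i, GY j]" "widx m [GY j, GX i]" using assms by auto
  fix c :: "'k pol" assume c: "pin (p+q) c"
  let ?m = "pc (mu p q pm \<gamma> i j) :: 'k pol"
  let ?r = "Poly_Mapping.single [GX i, GY j] 1 - Poly_Mapping.single [GY j, GX i] ?m :: 'k tgw"
  have "?r \<in> rels p q pm \<gamma> m" using assms by (rule rel4_mem)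
  from is_ideal_uminus[OF Irel_ideal rel_in_I[OF this, of "c * ?m"]]
  have "- (Poly_Mapping.single [GX i, GY j] (c * ?m) - Poly_Mapping.single [GY j, GX i] (c * (?m * ?m))) \<in> Ir"
    using c by (simp add: gmult_diff_right gmult_nil_single pin_mult mult.assoc)
  then have "Poly_Mapping.single [GY j, GX i] c - Poly_Mapping.single [GX i, GY j] (c * ?m) \<in> Ir"
    by (simp add: mu_sq)
  moreover have "pin (p+q) (c * ?m)" using c by (simp add: pin_mult)
  ultimately show "\<exists>c'. pin (p+q) c' \<and> Poly_Mapping.single [GY j, GX i] c - Poly_Mapping.single [GX i, GY j] c' \<in> Ir"
    by blast
qed

lemma R_B3: assumes "i \<in> {1..m}" shows "WRr [GY i, GX i] []"
  unfolding WR_def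
proof (intro conjI allI impI)
  show "widx m [GY i, GX i]" "widx m []" using assms by auto
  fix c :: "'k pol" assume c: "pin (p+q) c"
  let ?r = "Poly_Mapping.single [GY i, GX i] 1 - Poly_Mapping.single [] (tt p q \<gamma> i) :: 'k tgw"
  have "?r \<in> rels p q pm \<gamma> m" using assms by (rule rel2_mem)
  from rel_in_I[OF this c]
  have "Poly_Mapping.single [GY i, GX i] c - Poly_Mapping.single [] (c * tt p q \<gamma> i) \<in> Ir"
    by (simp add: gmult_diff_right gmult_nil_single)
  moreover have "pin (p+q) (c * tt p q \<gamma> i)" using c by (simp add: pin_mult pin_tt)
  ultimately show "\<exists>c'. pin (p+q) c' \<and> Poly_Mapping.single [GY i, GX i] c - Poly_Mapping.single [] c' \<in> Ir"
    by blast
qed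

lemma R_B4: assumes "i \<in> {1..m}" shows "WRr [GX i, GY i] []"
  unfolding WR_def
proof (intro conjI allI impI)
  show "widx m [GX i, GY i]" "widx m []" using assms by auto
  fix c :: "'k pol" assume c: "pin (p+q) c"
  let ?r = "Poly_Mapping.single [GX i, GY i] 1 - Poly_Mapping.single [] (sigma p q pm \<gamma> i (tt p q \<gamma> i)) :: 'k tgw"
  have "?r \<in> rels p q pm \<gamma> m" using assms by (rule rel3_mem)
  from rel_in_I[OF this c]
  have "Poly_Mapping.single [GX i, GY i] c - Poly_Mapping.single [] (c * sigma p q pm \<gamma> i (tt p q \<gamma> i)) \<in> Ir"
    by (simp add: gmult_diff_right gmult_nil_single)
  moreover have "pin (p+q) (c * sigma p q pm \<gamma> i (tt p q \<gamma> i))" using c by (simp add: pin_mult pin_tt pin_sigma)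
  ultimately show "\<exists>c'. pin (p+q) c' \<and> Poly_Mapping.single [GX i, GY i] c - Poly_Mapping.single [] c' \<in> Ir"
    by blast
qed

lemma R_swap: "swp x y \<Longrightarrow> sidx x \<in> {1..m} \<Longrightarrow> sidx y \<in> {1..m} \<Longrightarrow> WRr [x, y] [y, x]"
  unfolding swp_def using R_B1 R_B2 by auto

lemma one_past:
  assumes "\<forall>y\<in>set B. swp x y" "widx m (u @ [x] @ B @ v)"
  shows "WRr (u @ [x] @ B @ v) (u @ B @ [x] @ v)"
  using assms
proof (induction B arbitrary: u)
  case Nil then show ?case by (simp add: R_refl)
next
  case (Cons y B)
  have s: "WRr [x, y] [y, x]" using Cons.prems by (intro R_swap) (auto simp: widx_def)
  have 1: "WRr (u @ [x, y] @ (B @ v)) (u @ [y, x] @ (B @ v))"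
    by (rule R_ctx[OF s]) (use Cons.prems in \<open>auto simp: widx_def\<close>)
  have 2: "WRr ((u @ [y]) @ [x] @ B @ v) ((u @ [y]) @ B @ [x] @ v)"
    by (rule Cons.IH) (use Cons.prems in \<open>auto simp: widx_def\<close>)
  show ?case using R_trans[OF 1[simplified] 2[simplified]] by simp
qed

lemma block_past:
  assumes "\<forall>x\<in>set A. \<forall>y\<in>set B. swp x y" "widx m (u @ A @ B @ v)"
  shows "WRr (u @ A @ B @ v) (u @ B @ A @ v)"
  using assms
proof (induction A arbitrary: u)
  case Nil then show ?case by (simp add: R_refl)
next
  case (Cons x A)
  have 1: "WRr ((u @ [x]) @ A @ B @ v) ((u @ [x]) @ B @ A @ v)"
    by (rule Cons.IH) (use Cons.prems in \<open>auto simp: widx_def\<close>)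
  have 2: "WRr (u @ [x] @ B @ (A @ v)) (u @ B @ [x] @ (A @ v))"
    by (rule one_past) (use Cons.prems in \<open>auto simp: widx_def\<close>)
  show ?case using R_trans[OF 1[simplified] 2[simplified]] by simp
qed

end


lemma wdeg_app: "wdeg (u @ v) = (\<lambda>k. wdeg u k + wdeg v k)"
proof (induction u rule: wdeg.induct)
  case 1 then show ?case by simp
next
  case (2 i w) then show ?case by (simp add: algebra_simps)
next
  case (3 i w) then show ?case by (simp add: algebra_simps)
qed

lemma wdeg_count: "wdeg w k = int (length (filter (\<lambda>x. x = GX k) w)) - int (length (filter (\<lambda>x. x = GY k) w))"
  by (induction w rule: wdeg.induct) auto

definition allX :: "gsym list \<Rightarrow> bool" where "allX xs \<longleftrightarrow> (\<forall>x\<in>set xs. \<exists>i. x = GX i)"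
definition allY :: "gsym list \<Rightarrow> bool" where "allY ys \<longleftrightarrow> (\<forall>x\<in>set ys. \<exists>i. x = GY i)"
definition disj :: "gsym list \<Rightarrow> gsym list \<Rightarrow> bool" where
  "disj xs ys \<longleftrightarrow> (\<forall>x\<in>set xs. \<forall>y\<in>set ys. sidx x \<noteq> sidx y)"

lemma nil_case:
  assumes "allX xs" "allY ys" "disj xs ys" "wdeg (xs @ ys) = (\<lambda>_. 0)"
  shows "xs = [] \<and> ys = []"
proof (rule ccontr)
  assume "\<not> (xs = [] \<and> ys = [])"
  then consider (x) x where "x \<in> set xs" | (y) y where "y \<in> set ys" by (metis list.set_intros(1) neq_Nil_conv)
  then show False
  proof cases
    case x
    then obtain i where i: "x = GX i" using assms(1) by (auto simp: allX_def)
    have "length (filter (\<lambda>z. z = GX i) (xs @ ys)) > 0" using x i by (auto simp: filter_empty_conv)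
    moreover have "filter (\<lambda>z. z = GY i) (xs @ ys) = []"
      using assms(1-3) x i by (fastforce simp: filter_empty_conv allX_def allY_def disj_def)
    ultimately have "wdeg (xs @ ys) i > 0" by (simp del: filter_append add: wdeg_count)
    then show False using assms(4) by simp
  next
    case y
    then obtain i where i: "y = GY i" using assms(2) by (auto simp: allY_def)
    have "length (filter (\<lambda>z. z = GY i) (xs @ ys)) > 0" using y i by (auto simp: filter_empty_conv)
    moreover have "filter (\<lambda>z. z = GX i) (xs @ ys) = []"
      using assms(1-3) y i by (fastforce simp: filter_empty_conv allX_def allY_def disj_def)
    ultimately have "wdeg (xs @ ys) i < 0" by (simp del: filter_append add: wdeg_count)
    then show False using assms(4) by simp
  qed
qed

context
  fixes p q m :: nat and pm :: int and \<gamma> :: "nat \<Rightarrow> nat \<Rightarrow> int" and T :: "'k::comm_ring_1 itself"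
  assumes sign: "pm = 1 \<or> pm = -1"
begin

abbreviation "RR \<equiv> WR p q pm \<gamma> m T"

lemma red:
  "allX xs \<Longrightarrow> allY ys \<Longrightarrow> disj xs ys \<Longrightarrow> widx m (xs @ ys @ w) \<Longrightarrow> wdeg (xs @ ys @ w) = (\<lambda>_. 0)
   \<Longrightarrow> RR (xs @ ys @ w) []"
proof (induction w arbitrary: xs ys)
  case Nil
  then have "xs = [] \<and> ys = []" using nil_case by auto
  then show ?case by (simp add: R_refl[OF sign])
next
  case (Cons y w)
  show ?case
  proof (cases y)
    case (GX a)
    show ?thesis
    proof (cases "GY a \<in> set ys")
      case True
      then obtain ys1 ys2 where ys: "ys = ys1 @ GY a # ys2" "GY a \<notin> set ys2"
        using split_list_last by metis
      have s1: "RR ((xs @ ys1 @ [GY a]) @ ys2 @ [GX a] @ w) ((xs @ ys1 @ [GY a]) @ [GX a] @ ys2 @ w)"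
      proof (rule block_past[OF sign])
        show "\<forall>x\<in>set ys2. \<forall>y\<in>set [GX a]. swp x y"
        proof (intro ballI)
          fix x y assume x: "x \<in> set ys2" and y: "y \<in> set [GX a]"
          then obtain d where d: "x = GY d" using Cons.prems(2) ys by (auto simp: allY_def)
          then have "d \<noteq> a" using x ys(2) by auto
          then show "swp x y" using d y by (auto simp: swp_def)
        qed
        show "widx m ((xs @ ys1 @ [GY a]) @ ys2 @ [GX a] @ w)" using Cons.prems(4) ys GX by simp
      qed
      have s2: "RR ((xs @ ys1) @ [GY a, GX a] @ (ys2 @ w)) ((xs @ ys1) @ [] @ (ys2 @ w))"
      proof (rule R_ctx[OF sign R_B3[OF sign]])
        show "a \<in> {1..m}" using Cons.prems(4) GX by simp
        show "widx m (xs @ ys1)" "widx m (ys2 @ w)" using Cons.prems(4) ys by auto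
      qed
      have s3: "RR (xs @ (ys1 @ ys2) @ w) []"
      proof (rule Cons.IH)
        show "allX xs" by (rule Cons.prems(1))
        show "allY (ys1 @ ys2)" using Cons.prems(2) ys by (auto simp: allY_def)
        show "disj xs (ys1 @ ys2)" using Cons.prems(3) ys by (auto simp: disj_def)
        show "widx m (xs @ (ys1 @ ys2) @ w)" using Cons.prems(4) ys by auto
        show "wdeg (xs @ (ys1 @ ys2) @ w) = (\<lambda>_. 0)"
        proof
          fix k show "wdeg (xs @ (ys1 @ ys2) @ w) k = 0"
            using fun_cong[OF Cons.prems(5), of k] ys GX by (cases "k = a") (simp_all add: wdeg_app)
        qed
      qed
      have s1': "RR (xs @ ys @ GX a # w) (xs @ ys1 @ GY a # GX a # ys2 @ w)" using s1 ys(1) by simp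
      have s2': "RR (xs @ ys1 @ GY a # GX a # ys2 @ w) (xs @ ys1 @ ys2 @ w)" using s2 by simp
      have s3': "RR (xs @ ys1 @ ys2 @ w) []" using s3 by simp
      show ?thesis using R_trans[OF sign R_trans[OF sign s1' s2'] s3'] GX by simp
    next
      case False
      have s1: "RR (xs @ ys @ [GX a] @ w) (xs @ [GX a] @ ys @ w)"
      proof (rule block_past[OF sign])
        show "\<forall>x\<in>set ys. \<forall>y\<in>set [GX a]. swp x y"
        proof (intro ballI)
          fix x y assume x: "x \<in> set ys" and y: "y \<in> set [GX a]"
          then obtain d where d: "x = GY d" using Cons.prems(2) by (auto simp: allY_def)
          then have "d \<noteq> a" using x False by auto
          then show "swp x y" using d y by (auto simp: swp_def)
        qed
        show "widx m (xs @ ys @ [GX a] @ w)" using Cons.prems(4) GX by simp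
      qed
      have s2: "RR ((xs @ [GX a]) @ ys @ w) []"
      proof (rule Cons.IH)
        show "allX (xs @ [GX a])" using Cons.prems(1) by (auto simp: allX_def)
        show "allY ys" by (rule Cons.prems(2))
        show "disj (xs @ [GX a]) ys" using Cons.prems(2,3) False by (force simp: disj_def allY_def)
        show "widx m ((xs @ [GX a]) @ ys @ w)" using Cons.prems(4) GX by auto
        show "wdeg ((xs @ [GX a]) @ ys @ w) = (\<lambda>_. 0)"
        proof
          fix k show "wdeg ((xs @ [GX a]) @ ys @ w) k = 0"
            using fun_cong[OF Cons.prems(5), of k] GX by (cases "k = a") (simp_all add: wdeg_app)
        qed
      qed
      show ?thesis using R_trans[OF sign s1[simplified] s2[simplified]] GX by simp
    qed
  next
    case (GY b)
    show ?thesis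
    proof (cases "GX b \<in> set xs")
      case True
      then obtain xs1 xs2 where xs: "xs = xs1 @ GX b # xs2" "GX b \<notin> set xs2"
        using split_list_last by metis
      have s1: "RR ([] @ xs @ ys @ ([GY b] @ w)) ([] @ ys @ xs @ ([GY b] @ w))"
      proof (rule block_past[OF sign])
        show "\<forall>x\<in>set xs. \<forall>y\<in>set ys. swp x y"
        proof (intro ballI)
          fix x y assume x: "x \<in> set xs" and y: "y \<in> set ys"
          obtain c where c: "x = GX c" using Cons.prems(1) x by (auto simp: allX_def)
          obtain d where d: "y = GY d" using Cons.prems(2) y by (auto simp: allY_def)
          have "c \<noteq> d" using Cons.prems(3) x y c d unfolding disj_def by force
          then show "swp x y" using c d by (auto simp: swp_def)
        qed
        show "widx m ([] @ xs @ ys @ [GY b] @ w)" using Cons.prems(4) GY by simp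
      qed
      have s2: "RR ((ys @ xs1 @ [GX b]) @ xs2 @ [GY b] @ w) ((ys @ xs1 @ [GX b]) @ [GY b] @ xs2 @ w)"
      proof (rule block_past[OF sign])
        show "\<forall>x\<in>set xs2. \<forall>y\<in>set [GY b]. swp x y"
        proof (intro ballI)
          fix x y assume x: "x \<in> set xs2" and y: "y \<in> set [GY b]"
          then obtain c where c: "x = GX c" using Cons.prems(1) xs by (auto simp: allX_def)
          then have "c \<noteq> b" using x xs(2) by auto
          then show "swp x y" using c y by (auto simp: swp_def)
        qed
        show "widx m ((ys @ xs1 @ [GX b]) @ xs2 @ [GY b] @ w)" using Cons.prems(4) xs GY by auto
      qed
      have s3: "RR ((ys @ xs1) @ [GX b, GY b] @ (xs2 @ w)) ((ys @ xs1) @ [] @ (xs2 @ w))"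
      proof (rule R_ctx[OF sign R_B4[OF sign]])
        show "b \<in> {1..m}" using Cons.prems(4) GY by simp
        show "widx m (ys @ xs1)" "widx m (xs2 @ w)" using Cons.prems(4) xs by auto
      qed
      have s4: "RR ([] @ ys @ (xs1 @ xs2) @ w) ([] @ (xs1 @ xs2) @ ys @ w)"
      proof (rule block_past[OF sign])
        show "\<forall>x\<in>set ys. \<forall>y\<in>set (xs1 @ xs2). swp x y"
        proof (intro ballI)
          fix x y assume x: "x \<in> set ys" and y: "y \<in> set (xs1 @ xs2)"
          then have y': "y \<in> set xs" using xs by auto
          obtain c where c: "y = GX c" using Cons.prems(1) y' by (auto simp: allX_def)
          obtain d where d: "x = GY d" using Cons.prems(2) x by (auto simp: allY_def)
          have "c \<noteq> d" using Cons.prems(3) x y' c d unfolding disj_def by force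
          then show "swp x y" using c d by (auto simp: swp_def)
        qed
        show "widx m ([] @ ys @ (xs1 @ xs2) @ w)" using Cons.prems(4) xs by auto
      qed
      have s5: "RR ((xs1 @ xs2) @ ys @ w) []"
      proof (rule Cons.IH)
        show "allX (xs1 @ xs2)" using Cons.prems(1) xs by (auto simp: allX_def)
        show "allY ys" by (rule Cons.prems(2))
        show "disj (xs1 @ xs2) ys" using Cons.prems(3) xs by (auto simp: disj_def)
        show "widx m ((xs1 @ xs2) @ ys @ w)" using Cons.prems(4) xs by auto
        show "wdeg ((xs1 @ xs2) @ ys @ w) = (\<lambda>_. 0)"
        proof
          fix k show "wdeg ((xs1 @ xs2) @ ys @ w) k = 0"
            using fun_cong[OF Cons.prems(5), of k] xs GY by (cases "k = b") (simp_all add: wdeg_app)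
        qed
      qed
      have s1': "RR (xs @ ys @ GY b # w) (ys @ xs1 @ GX b # xs2 @ GY b # w)" using s1 xs(1) by simp
      have s2': "RR (ys @ xs1 @ GX b # xs2 @ GY b # w) (ys @ xs1 @ GX b # GY b # xs2 @ w)" using s2 by simp
      have s3': "RR (ys @ xs1 @ GX b # GY b # xs2 @ w) (ys @ xs1 @ xs2 @ w)" using s3 by simp
      have s4': "RR (ys @ xs1 @ xs2 @ w) (xs1 @ xs2 @ ys @ w)" using s4 by simp
      have s5': "RR (xs1 @ xs2 @ ys @ w) []" using s5 by simp
      show ?thesis using R_trans[OF sign R_trans[OF sign R_trans[OF sign R_trans[OF sign s1' s2'] s3'] s4'] s5'] GY by simp
    next
      case False
      have "RR (xs @ (ys @ [GY b]) @ w) []"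
      proof (rule Cons.IH)
        show "allX xs" by (rule Cons.prems(1))
        show "allY (ys @ [GY b])" using Cons.prems(2) by (auto simp: allY_def)
        show "disj xs (ys @ [GY b])" using Cons.prems(1,3) False by (force simp: disj_def allX_def)
        show "widx m (xs @ (ys @ [GY b]) @ w)" using Cons.prems(4) GY by auto
        show "wdeg (xs @ (ys @ [GY b]) @ w) = (\<lambda>_. 0)"
        proof
          fix k show "wdeg (xs @ (ys @ [GY b]) @ w) k = 0"
            using fun_cong[OF Cons.prems(5), of k] GY by (cases "k = b") (simp_all add: wdeg_app)
        qed
      qed
      then show ?thesis using GY by simp
    qed
  qed
qed

lemma red0: "widx m w \<Longrightarrow> wdeg w = (\<lambda>_. 0) \<Longrightarrow> RR w []"
  using red[of "[]" "[]" w] by (simp add: allX_def allY_def disj_def)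

end


section \<open>Coefficient extraction\<close>

lemma var_pow: "var N ^ d = (Poly_Mapping.single (Poly_Mapping.single N d) 1 :: 'k::comm_ring_1 pol)"
proof (induction d)
  case 0 then show ?case by simp
next
  case (Suc d)
  have "var N ^ Suc d = (Poly_Mapping.single (Poly_Mapping.single N d) 1 :: 'k pol) * var N"
    by (simp add: Suc mult.commute)
  also have "\<dots> = Poly_Mapping.single (Poly_Mapping.single N (Suc d)) 1"
    by (simp add: var_def mult_single single_add[symmetric])
  finally show ?case .
qed

lemma mono_split:
  "Poly_Mapping.single mon c = var N ^ (Poly_Mapping.lookup mon N) *
     Poly_Mapping.single (Poly_Mapping.update N 0 mon) (c :: 'k::comm_ring_1)"
proof -
  have "Poly_Mapping.single N (Poly_Mapping.lookup mon N) + Poly_Mapping.update N 0 mon = mon"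
    by (rule poly_mapping_eqI) (simp add: lookup_add lookup_single lookup_update when_def)
  then show ?thesis by (simp add: var_pow mult_single)
qed

definition cf :: "nat \<Rightarrow> nat \<Rightarrow> 'k::comm_ring_1 pol \<Rightarrow> 'k pol" where
  "cf N d r = (\<Sum>mon\<in>{mon\<in>Poly_Mapping.keys r. Poly_Mapping.lookup mon N = d}.
                 Poly_Mapping.single (Poly_Mapping.update N 0 mon) (Poly_Mapping.lookup r mon))"

lemma decomp:
  assumes "\<forall>mon\<in>Poly_Mapping.keys r. Poly_Mapping.lookup mon N \<le> M"
  shows "r = (\<Sum>d\<in>{..M}. var N ^ d * cf N d (r :: 'k::comm_ring_1 pol))"
proof -
  have "r = (\<Sum>mon\<in>Poly_Mapping.keys r. Poly_Mapping.single mon (Poly_Mapping.lookup r mon))"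
    by (rule pm_expand)
  also have "\<dots> = (\<Sum>mon\<in>Poly_Mapping.keys r. var N ^ (Poly_Mapping.lookup mon N) *
      Poly_Mapping.single (Poly_Mapping.update N 0 mon) (Poly_Mapping.lookup r mon))"
    by (subst mono_split) (rule refl)
  also have "\<dots> = (\<Sum>d\<in>{..M}. \<Sum>mon\<in>{mon\<in>Poly_Mapping.keys r. Poly_Mapping.lookup mon N = d}.
      var N ^ (Poly_Mapping.lookup mon N) * Poly_Mapping.single (Poly_Mapping.update N 0 mon) (Poly_Mapping.lookup r mon))"
    by (rule sum.group[symmetric]) (use assms in auto)
  also have "\<dots> = (\<Sum>d\<in>{..M}. var N ^ d * cf N d r)"
    unfolding cf_def sum_distrib_left by (intro sum.cong refl) auto
  finally show ?thesis .
qed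

lemma cf_pin:
  assumes "pin (Suc N) r"
  shows "pin N (cf (Suc N) d r)"
  unfolding pin_def
proof
  fix mon assume "mon \<in> Poly_Mapping.keys (cf (Suc N) d r)"
  then have "mon \<in> (\<Union>mon'\<in>{mon\<in>Poly_Mapping.keys r. Poly_Mapping.lookup mon (Suc N) = d}.
      Poly_Mapping.keys (Poly_Mapping.single (Poly_Mapping.update (Suc N) 0 mon') (Poly_Mapping.lookup r mon')))"
    unfolding cf_def by (rule subsetD[OF keys_sum])
  then obtain mon' where "mon' \<in> Poly_Mapping.keys r" "mon \<in> Poly_Mapping.keys (Poly_Mapping.single (Poly_Mapping.update (Suc N) 0 mon') (Poly_Mapping.lookup r mon'))"
    by blast
  then have "mon = Poly_Mapping.update (Suc N) 0 mon'" "Poly_Mapping.keys mon' \<subseteq> {1..Suc N}"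
    using assms by (auto simp: pin_def split: if_splits)
  then show "Poly_Mapping.keys mon \<subseteq> {1..N}" by (auto simp: keys_update)
qed

lemma pin_mono: "pin N r \<Longrightarrow> N \<le> M \<Longrightarrow> pin M r"
  unfolding pin_def
proof
  fix mon assume "\<forall>mon\<in>Poly_Mapping.keys r. Poly_Mapping.keys mon \<subseteq> {1..N}" "N \<le> M" "mon \<in> Poly_Mapping.keys r"
  then have "Poly_Mapping.keys mon \<subseteq> {1..N}" "{1..N} \<subseteq> {1..M}" by auto
  then show "Poly_Mapping.keys mon \<subseteq> {1..M}" by (rule order_trans)
qed

lemma ev_cf_indep:
  assumes "pin (Suc N) r" "\<And>v. v \<noteq> Suc N \<Longrightarrow> P v = Q v"
  shows "ev P (cf (Suc N) d r) = ev Q (cf (Suc N) d r)"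
proof (rule ev_cong_vars)
  fix mon v assume "mon \<in> Poly_Mapping.keys (cf (Suc N) d r)" "v \<in> Poly_Mapping.keys mon"
  then have "v \<in> {1..N}" using cf_pin[OF assms(1), of d] unfolding pin_def by blast
  then show "P v = Q v" using assms(2) by simp
qed

lemma poly_vanish:
  fixes e :: "nat \<Rightarrow> 'k::field_char_0"
  assumes "\<forall>x::int. (\<Sum>d\<in>{..M}. of_int x ^ d * e d) = 0"
  shows "d \<le> M \<Longrightarrow> e d = 0"
proof -
  let ?P = "\<Sum>d\<in>{..M}. monom (e d) d"
  have roots: "poly ?P (of_int x) = 0" for x
    using assms by (simp add: poly_sum poly_monom mult.commute)
  have "?P = 0"
  proof (rule ccontr)
    assume "?P \<noteq> 0"
    then have "finite {x. poly ?P x = 0}" by (rule poly_roots_finite)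
    moreover have "range (of_int :: int \<Rightarrow> 'k) \<subseteq> {x. poly ?P x = 0}" using roots by auto
    moreover have "infinite (range (of_int :: int \<Rightarrow> 'k))"
    proof
      assume "finite (range (of_int :: int \<Rightarrow> 'k))"
      moreover have "inj_on (of_int :: int \<Rightarrow> 'k) UNIV" by (auto simp: inj_on_def)
      ultimately have "finite (UNIV :: int set)" by (rule finite_imageD)
      then show False using infinite_UNIV_int by blast
    qed
    ultimately show False using finite_subset by blast
  qed
  moreover assume "d \<le> M"
  then have "coeff ?P d = e d" by (simp add: coeff_sum)
  ultimately show "e d = 0" by simp
qed

section \<open>Membership of degree zero elements\<close>

abbreviation Bm :: "nat \<Rightarrow> nat \<Rightarrow> int \<Rightarrow> (nat \<Rightarrow> nat \<Rightarrow> int) \<Rightarrow> nat \<Rightarrow> 'k::comm_ring_1 pol \<Rightarrow> bool" where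
  "Bm p q pm \<gamma> m r \<equiv> Poly_Mapping.single [] r \<in> Irel p q pm \<gamma> m"

lemma Irel_zero [simp]: "0 \<in> Irel p q pm \<gamma> m"
  by (rule is_ideal_zero[OF Irel_ideal])

lemma Bm_zero: "Bm p q pm \<gamma> m (0 :: 'k::comm_ring_1 pol)"
  using is_ideal_zero[OF Irel_ideal] by simp

lemma Bm_add: "Bm p q pm \<gamma> m r \<Longrightarrow> Bm p q pm \<gamma> m s \<Longrightarrow> Bm p q pm \<gamma> m (r + (s :: 'k::comm_ring_1 pol))"
  using is_ideal_add[OF Irel_ideal] by (simp add: single_add)

lemma Bm_sum: "(\<And>i. i \<in> I \<Longrightarrow> Bm p q pm \<gamma> m (r i)) \<Longrightarrow> Bm p q pm \<gamma> m (\<Sum>i\<in>I. r i :: 'k::comm_ring_1 pol)"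
  by (induction I rule: infinite_finite_induct) (auto intro: Bm_add Bm_zero)

lemma Bm_mult: "pin (p+q) c \<Longrightarrow> Bm p q pm \<gamma> m r \<Longrightarrow> Bm p q pm \<gamma> m (c * (r :: 'k::comm_ring_1 pol))"
proof -
  assume c: "pin (p+q) c" and r: "Bm p q pm \<gamma> m r"
  have "gmult p q pm \<gamma> (Poly_Mapping.single [] c) (Poly_Mapping.single [] r) \<in> Irel p q pm \<gamma> m"
    by (rule is_ideal_multL[OF Irel_ideal r]) (simp add: Fcar_single c)
  then show ?thesis by (simp add: gmult_single)
qed

lemma rel1_mem: "j \<in> {1..p+q} \<Longrightarrow> lam p pm j j = -1 \<Longrightarrow>
   Poly_Mapping.single [] (var j ^ 2 - var j) \<in> rels p q pm \<gamma> m"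
  unfolding rels_def by (intro UnI1) blast

lemma Bm_uu:
  assumes "j \<in> {1..p+q}" "lam p pm j j = -1" "d \<ge> 1"
  shows "Bm p q pm \<gamma> m (var j ^ d - (var j :: 'k::comm_ring_1 pol))"
  using assms(3)
proof (induction d rule: dec_induct)
  case base then show ?case using Bm_zero by simp
next
  case (step d)
  have eq: "var j ^ Suc d - var j = var j * (var j ^ d - var j) + (var j ^ 2 - (var j :: 'k pol))"
    by (simp add: algebra_simps power2_eq_square)
  have "Bm p q pm \<gamma> m (var j ^ 2 - (var j :: 'k pol))"
    using rels_Irel rel1_mem[OF assms(1,2)] by blast
  then show ?case unfolding eq using step.IH assms(1) by (intro Bm_add Bm_mult pin_var)
qed

lemma faith_N:
  fixes r :: "'k::field_char_0 pol"
  assumes "N \<le> p+q" "pin N r" "\<forall>l. ev (pt p pm l) r = 0"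
  shows "Bm p q pm \<gamma> m r"
  using assms
proof (induction N arbitrary: r)
  case 0
  have "r = 0"
  proof (rule poly_mapping_eqI)
    fix mon
    show "Poly_Mapping.lookup r mon = Poly_Mapping.lookup 0 mon"
    proof (cases "mon \<in> Poly_Mapping.keys r")
      case True
      then have "mon = 0" using 0 by (auto simp: pin_def)
      then have "r = Poly_Mapping.single 0 (Poly_Mapping.lookup r 0)"
        using 0 True by (intro poly_mapping_eqI) (auto simp: pin_def lookup_single when_def in_keys_iff)
      then have "ev (pt p pm (\<lambda>_. 0)) r = Poly_Mapping.lookup r 0"
        by (metis ev_single mev_zero mult.right_neutral)
      then show ?thesis using 0 \<open>mon = 0\<close> by simp
    next
      case False then show ?thesis by (simp add: in_keys_iff)
    qed
  qed
  then show ?case by (simp add: Bm_zero)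
next
  case (Suc N)
  obtain M where M: "\<forall>mon\<in>Poly_Mapping.keys r. Poly_Mapping.lookup mon (Suc N) \<le> M"
  proof -
    have "\<forall>mon\<in>Poly_Mapping.keys r. Poly_Mapping.lookup mon (Suc N) \<le> (\<Sum>mon'\<in>Poly_Mapping.keys r. Poly_Mapping.lookup mon' (Suc N))"
      by (intro ballI member_le_sum) auto
    then show ?thesis using that by blast
  qed
  have dec: "r = (\<Sum>d\<in>{..M}. var (Suc N) ^ d * cf (Suc N) d r)" by (rule decomp[OF M])
  let ?e = "\<lambda>l d. ev (pt p pm l) (cf (Suc N) d r)"
  have pinN: "pin N (cf (Suc N) d r)" for d by (rule cf_pin[OF Suc.prems(2)])
  have pinn: "pin (p+q) (cf (Suc N) d r)" for d using pinN[of d] Suc.prems(1) by (auto intro: pin_mono)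
  have ev_r: "ev (pt p pm l) r = (\<Sum>d\<in>{..M}. pt p pm l (Suc N) ^ d * ?e l d)" for l
    by (subst dec) (simp add: ev_sum ev_mult ev_power)
  have indep: "?e (l(Suc N := x)) d = ?e l d" for l x d
    by (rule ev_cf_indep[OF Suc.prems(2)]) (simp add: pt_def)
  have IH: "Bm p q pm \<gamma> m (cf (Suc N) d r)" if "\<forall>l. ?e l d = 0" for d
    using Suc.IH[OF _ pinN that] Suc.prems(1) by simp
  have Sn: "Suc N \<in> {1..p+q}" using Suc.prems(1) by simp
  show ?case
  proof (cases "lam p pm (Suc N) (Suc N) = -1")
    case False
    have "?e l d = 0" if "d \<le> M" for l d
    proof (rule poly_vanish[OF _ that, where e="?e l"], rule allI)
      fix x :: int
      have "ev (pt p pm (l(Suc N := x))) r = 0" using Suc.prems(3) by blast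
      then show "(\<Sum>d\<in>{..M}. of_int x ^ d * ?e l d) = 0"
        using False by (simp add: ev_r indep pt_def)
    qed
    then have "Bm p q pm \<gamma> m (cf (Suc N) d r)" if "d \<le> M" for d using IH that by blast
    then have "Bm p q pm \<gamma> m (\<Sum>d\<in>{..M}. var (Suc N) ^ d * cf (Suc N) d r)"
      by (intro Bm_sum Bm_mult pin_power pin_var Sn) auto
    then show ?thesis using dec by simp
  next
    case True
    have at: "{..M} = insert 0 {1..M}" by auto
    have fin: "0 \<notin> {1..M}" by simp
    have e0: "?e l 0 = 0" for l
    proof -
      have "ev (pt p pm (l(Suc N := 0))) r = 0" using Suc.prems(3) by blast
      moreover have "(\<Sum>d\<in>{1..M}. (0::'k) ^ d * ?e l d) = 0" by (intro sum.neutral) auto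
      ultimately show ?thesis using True by (simp add: ev_r indep pt_def at)
    qed
    let ?S = "\<Sum>d\<in>{1..M}. cf (Suc N) d r"
    have eS: "ev (pt p pm l) ?S = 0" for l
    proof -
      have "ev (pt p pm (l(Suc N := 1))) r = 0" using Suc.prems(3) by blast
      then have "?e l 0 + (\<Sum>d\<in>{1..M}. ?e l d) = 0" using True by (simp add: ev_r indep pt_def at)
      then show ?thesis using e0 by (simp add: ev_sum)
    qed
    have pinS: "pin N ?S" by (intro pin_sum pinN)
    have B0: "Bm p q pm \<gamma> m (cf (Suc N) 0 r)" using IH e0 by blast
    have BS: "Bm p q pm \<gamma> m ?S" using Suc.IH[OF _ pinS] Suc.prems(1) eS by simp
    let ?u = "var (Suc N) :: 'k pol"
    have "r = cf (Suc N) 0 r + (\<Sum>d\<in>{1..M}. ?u ^ d * cf (Suc N) d r)"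
      using dec by (simp add: at)
    also have "(\<Sum>d\<in>{1..M}. ?u ^ d * cf (Suc N) d r) =
       (\<Sum>d\<in>{1..M}. ?u * cf (Suc N) d r + cf (Suc N) d r * (?u ^ d - ?u))"
      by (rule sum.cong[OF refl]) (simp add: algebra_simps)
    also have "\<dots> = ?u * ?S + (\<Sum>d\<in>{1..M}. cf (Suc N) d r * (?u ^ d - ?u))"
      by (simp only: sum.distrib sum_distrib_left)
    finally have r: "r = cf (Suc N) 0 r + (?u * ?S + (\<Sum>d\<in>{1..M}. cf (Suc N) d r * (?u ^ d - ?u)))" .
    have "Bm p q pm \<gamma> m (\<Sum>d\<in>{1..M}. cf (Suc N) d r * (?u ^ d - ?u))"
      by (intro Bm_sum Bm_mult pinn Bm_uu[OF Sn True]) auto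
    moreover have "Bm p q pm \<gamma> m (?u * ?S)" by (intro Bm_mult BS pin_var Sn)
    ultimately have "Bm p q pm \<gamma> m (cf (Suc N) 0 r + (?u * ?S + (\<Sum>d\<in>{1..M}. cf (Suc N) d r * (?u ^ d - ?u))))"
      using B0 by (intro Bm_add)
    then show ?thesis unfolding r[symmetric] .
  qed
qed


section \<open>Shifts versus degrees\<close>

definition Dsh :: "nat \<Rightarrow> nat \<Rightarrow> (nat \<Rightarrow> nat \<Rightarrow> int) \<Rightarrow> (nat \<Rightarrow> int) \<Rightarrow> st" where
  "Dsh m n \<gamma> e = (\<lambda>v. \<Sum>i\<in>{1..m}. e i * gsh n \<gamma> i v, e)"

lemma wsh_wdeg: "widx m w \<Longrightarrow> wsh n \<gamma> w = Dsh m n \<gamma> (wdeg w)"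
proof (induction w rule: wdeg.induct)
  case 1 then show ?case by (simp add: Dsh_def zero_fun_def zero_prod_def)
next
  case (2 i w)
  then have i: "i \<in> {1..m}" and IH: "wsh n \<gamma> w = Dsh m n \<gamma> (wdeg w)" by auto
  have "(\<lambda>v. \<Sum>ia\<in>{1..m}. ((if ia = i then 1 else 0) + wdeg w ia) * gsh n \<gamma> ia v)
      = (\<lambda>v. gsh n \<gamma> i v + (\<Sum>ia\<in>{1..m}. wdeg w ia * gsh n \<gamma> ia v))"
  proof
    fix v
    have "\<And>ia. ((if ia = i then 1 else 0) + wdeg w ia) * gsh n \<gamma> ia v =
        (if ia = i then gsh n \<gamma> ia v else 0) + wdeg w ia * gsh n \<gamma> ia v" by (simp add: algebra_simps)
    then have "(\<Sum>ia\<in>{1..m}. ((if ia = i then 1 else 0) + wdeg w ia) * gsh n \<gamma> ia v) =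
        (\<Sum>ia\<in>{1..m}. (if ia = i then gsh n \<gamma> ia v else 0)) + (\<Sum>ia\<in>{1..m}. wdeg w ia * gsh n \<gamma> ia v)"
      by (simp only: sum.distrib)
    also have "(\<Sum>ia\<in>{1..m}. (if ia = i then gsh n \<gamma> ia v else 0)) = gsh n \<gamma> i v"
      using i by (simp add: sum.delta)
    finally show "(\<Sum>ia\<in>{1..m}. ((if ia = i then 1 else 0) + wdeg w ia) * gsh n \<gamma> ia v) =
        gsh n \<gamma> i v + (\<Sum>ia\<in>{1..m}. wdeg w ia * gsh n \<gamma> ia v)" .
  qed
  then show ?case using IH by (simp add: Dsh_def dsym_GX plus_fun_def)
next
  case (3 i w)
  then have i: "i \<in> {1..m}" and IH: "wsh n \<gamma> w = Dsh m n \<gamma> (wdeg w)" by auto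
  have "(\<lambda>v. \<Sum>ia\<in>{1..m}. ((if ia = i then -1 else 0) + wdeg w ia) * gsh n \<gamma> ia v)
      = (\<lambda>v. - gsh n \<gamma> i v + (\<Sum>ia\<in>{1..m}. wdeg w ia * gsh n \<gamma> ia v))"
  proof
    fix v
    have "\<And>ia. ((if ia = i then -1 else 0) + wdeg w ia) * gsh n \<gamma> ia v =
        (if ia = i then - gsh n \<gamma> ia v else 0) + wdeg w ia * gsh n \<gamma> ia v" by (simp add: algebra_simps)
    then have "(\<Sum>ia\<in>{1..m}. ((if ia = i then -1 else 0) + wdeg w ia) * gsh n \<gamma> ia v) =
        (\<Sum>ia\<in>{1..m}. (if ia = i then - gsh n \<gamma> ia v else 0)) + (\<Sum>ia\<in>{1..m}. wdeg w ia * gsh n \<gamma> ia v)"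
      by (simp only: sum.distrib)
    also have "(\<Sum>ia\<in>{1..m}. (if ia = i then - gsh n \<gamma> ia v else 0)) = - gsh n \<gamma> i v"
      using i by (simp add: sum.delta)
    finally show "(\<Sum>ia\<in>{1..m}. ((if ia = i then -1 else 0) + wdeg w ia) * gsh n \<gamma> ia v) =
        - gsh n \<gamma> i v + (\<Sum>ia\<in>{1..m}. wdeg w ia * gsh n \<gamma> ia v)" .
  qed
  moreover have "(\<lambda>x. wdeg w x - (if x = i then 1 else 0)) = (\<lambda>a. (if a = i then - 1 else 0) + wdeg w a)"
    by auto
  ultimately show ?case using IH by (simp add: Dsh_def dsym_GY dsym_GX plus_fun_def fun_Compl_def)
qed

lemma Dsh_inj: "Dsh m n \<gamma> e = Dsh m n \<gamma> e' \<Longrightarrow> e = e'"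
  by (simp add: Dsh_def)

lemma rho_homog:
  assumes "x \<in> Fcar n m" "homog e x"
  shows "rho p pm A n \<gamma> x f s = rho p pm A n \<gamma> x (\<lambda>_. 1) s * f (s - Dsh m n \<gamma> e)"
proof -
  have "\<And>w. w \<in> Poly_Mapping.keys x \<Longrightarrow> wsh n \<gamma> w = Dsh m n \<gamma> e"
    using assms Fcar_keys wsh_wdeg by (fastforce simp: homog_def)
  then show ?thesis by (simp add: rho_def lin_def sum_distrib_right)
qed

section \<open>The involution\<close>

lemma starw_Nil [simp]: "starw [] = []" by (simp add: starw_def)
lemma starw_Cons [simp]: "starw (x # w) = starw w @ [sswap x]" by (simp add: starw_def)

lemma dsym_sswap: "dsym n \<gamma> (sswap x) = - dsym n \<gamma> x"
  by (cases x) (simp_all add: dsym_def)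

lemma wsh_starw: "wsh n \<gamma> (starw w) = - wsh n \<gamma> w"
  by (induction w) (simp_all add: dsym_sswap algebra_simps)

lemma wk_starw: "wk A n \<gamma> (starw w) s = wk A n \<gamma> w (s + wsh n \<gamma> w)"
proof (induction w arbitrary: s)
  case Nil then show ?case by simp
next
  case (Cons x w)
  have 1: "wk A n \<gamma> [sswap x] t = wk A n \<gamma> [x] (t + dsym n \<gamma> x)" for t
    by (cases x) (simp_all add: dsym_GY')
  have "wk A n \<gamma> (starw (x # w)) s = wk A n \<gamma> (starw w) s * wk A n \<gamma> [sswap x] (s - wsh n \<gamma> (starw w))"
    by (simp add: wk_append)
  also have "\<dots> = wk A n \<gamma> w (s + wsh n \<gamma> w) * wk A n \<gamma> [x] (s + wsh n \<gamma> w + dsym n \<gamma> x)"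
    by (simp add: Cons 1 wsh_starw)
  also have "\<dots> = wk A n \<gamma> (x # w) (s + wsh n \<gamma> (x # w))"
    by (subst wk_Cons) (simp add: algebra_simps)
  finally show ?case .
qed

lemma wdeg_sswap: "wdeg [sswap x] = (\<lambda>k. - wdeg [x] k)"
  by (cases x) (auto simp: fun_eq_iff)

lemma wdeg_starw: "wdeg (starw w) = (\<lambda>k. - wdeg w k)"
proof (induction w)
  case Nil then show ?case by simp
next
  case (Cons x w)
  have "wdeg (x # w) = (\<lambda>k. wdeg [x] k + wdeg w k)" using wdeg_app[of "[x]" w] by simp
  then show ?case using Cons by (simp add: wdeg_app wdeg_sswap fun_eq_iff)
qed

lemma rho_gstar:
  assumes sign: "pm = 1 \<or> pm = -1"
  shows "rho p pm A (p+q) \<gamma> (gstar p q pm \<gamma> a) h s =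
    (\<Sum>w\<in>Poly_Mapping.keys a. evs p pm (s + wsh (p+q) \<gamma> w) (Poly_Mapping.lookup a w) *
        wk A (p+q) \<gamma> w (s + wsh (p+q) \<gamma> w) * h (s + wsh (p+q) \<gamma> w))"
  unfolding gstar_def rho_sum rho_single
  by (intro sum.cong refl) (simp add: evs_sigw[OF sign] wk_starw wsh_starw)

lemma rho_gstar_homog:
  assumes sign: "pm = 1 \<or> pm = -1" and "a \<in> Fcar (p+q) m" "homog e a"
  shows "rho p pm A (p+q) \<gamma> (gstar p q pm \<gamma> a) h s =
     rho p pm A (p+q) \<gamma> a (\<lambda>_. 1) (s + Dsh m (p+q) \<gamma> e) * h (s + Dsh m (p+q) \<gamma> e)"
proof -
  have "\<And>w. w \<in> Poly_Mapping.keys a \<Longrightarrow> wsh (p+q) \<gamma> w = Dsh m (p+q) \<gamma> e"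
    using assms Fcar_keys wsh_wdeg by (fastforce simp: homog_def)
  then show ?thesis unfolding rho_gstar[OF sign] by (simp add: rho_def lin_def sum_distrib_right)
qed

lemma star_kill:
  fixes a :: "'k::alg_closed_field tgw"
  assumes sign: "pm = 1 \<or> pm = -1" and aF: "a \<in> Fcar (p+q) m" and ah: "homog e a"
    and z: "\<forall>f s. rhoA p q pm \<gamma> (gmult p q pm \<gamma> (gstar p q pm \<gamma> a) a) f s = 0"
  shows "rhoA p q pm \<gamma> a f s = 0"
proof -
  let ?D = "Dsh m (p+q) \<gamma> e"
  let ?k = "\<lambda>t. rhoA p q pm \<gamma> a (\<lambda>_. 1) t"
  have sq0: "?k (t + ?D) * ?k (t + ?D) = 0" for t
  proof -
    have "rhoA p q pm \<gamma> (gmult p q pm \<gamma> (gstar p q pm \<gamma> a) a) (\<lambda>_. 1) t = 0" using z by blast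
    then have "rhoA p q pm \<gamma> (gstar p q pm \<gamma> a) (rhoA p q pm \<gamma> a (\<lambda>_. 1)) t = 0"
      by (simp add: rho_hom[OF sign])
    then show ?thesis by (simp only: rho_gstar_homog[OF sign aF ah])
  qed
  have k0: "?k t = 0" for t using sq0[of "t - ?D"] by simp
  have "rhoA p q pm \<gamma> a f s = ?k s * f (s - ?D)" by (rule rho_homog[OF aF ah])
  then show ?thesis using k0[of s] by simp
qed


lemma single_sum: "Poly_Mapping.single k (\<Sum>i\<in>A. f i) = (\<Sum>i\<in>A. Poly_Mapping.single k (f i))"
  by (induction A rule: infinite_finite_induct) (simp_all add: single_add)

lemma hcomp_rho:
  "rho p pm A n \<gamma> (hcomp g x) f s =
     (\<Sum>w\<in>{w\<in>Poly_Mapping.keys x. wdeg w = g}. evs p pm s (Poly_Mapping.lookup x w) * wk A n \<gamma> w s * f (s - wsh n \<gamma> w))"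
  unfolding hcomp_def rho_sum rho_single ..

lemma KJ_graded:
  assumes sign: "pm = 1 \<or> pm = -1"
  shows "graded_set (KJ p q pm \<gamma> m :: 'k::alg_closed_field tgw set)"
  unfolding graded_set_def
proof (intro ballI allI)
  fix x :: "'k tgw" and g assume x: "x \<in> KJ p q pm \<gamma> m"
  then have xF: "x \<in> Fcar (p+q) m" and x0: "\<And>f s. rhoA p q pm \<gamma> x f s = 0" by (auto simp: KJ_def)
  let ?S = "{w\<in>Poly_Mapping.keys x. wdeg w = g}"
  let ?D = "Dsh m (p+q) \<gamma> g"
  have wS: "wsh (p+q) \<gamma> w = ?D" if "w \<in> ?S" for w
    using that xF Fcar_keys wsh_wdeg by fastforce
  have hF: "hcomp g x \<in> Fcar (p+q) m"
    unfolding hcomp_def by (intro Fcar_sum Fcar_single) (use xF Fcar_keys in auto)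
  have "rhoA p q pm \<gamma> (hcomp g x) f s = 0" for f s
  proof -
    let ?f0 = "\<lambda>t. if t = s - ?D then 1 else (0::'k)"
    have eqv: "(s - wsh (p+q) \<gamma> w = s - ?D) \<longleftrightarrow> wdeg w = g" if "w \<in> Poly_Mapping.keys x" for w
    proof -
      have "wsh (p+q) \<gamma> w = Dsh m (p+q) \<gamma> (wdeg w)" using that xF Fcar_keys wsh_wdeg by blast
      then show ?thesis using Dsh_inj by auto
    qed
    have "0 = rhoA p q pm \<gamma> x ?f0 s" using x0 by simp
    also have "\<dots> = (\<Sum>w\<in>Poly_Mapping.keys x. if wdeg w = g then evs p pm s (Poly_Mapping.lookup x w) * wk (al p q pm \<gamma>) (p+q) \<gamma> w s else 0)"
      unfolding rho_def lin_def by (intro sum.cong refl) (simp add: eqv)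
    also have "\<dots> = (\<Sum>w\<in>?S. evs p pm s (Poly_Mapping.lookup x w) * wk (al p q pm \<gamma>) (p+q) \<gamma> w s)"
      by (simp add: sum.inter_filter)
    finally have z: "(\<Sum>w\<in>?S. evs p pm s (Poly_Mapping.lookup x w) * wk (al p q pm \<gamma>) (p+q) \<gamma> w s) = 0" by simp
    have "rhoA p q pm \<gamma> (hcomp g x) f s = (\<Sum>w\<in>?S. evs p pm s (Poly_Mapping.lookup x w) * wk (al p q pm \<gamma>) (p+q) \<gamma> w s) * f (s - ?D)"
      unfolding hcomp_rho sum_distrib_right by (intro sum.cong refl) (simp add: wS)
    then show ?thesis using z by simp
  qed
  then show "hcomp g x \<in> KJ p q pm \<gamma> m" using hF by (simp add: KJ_def)
qed

lemma KJ_deg0: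
  fixes x :: "'k::{alg_closed_field, field_char_0} tgw"
  assumes sign: "pm = 1 \<or> pm = -1"
    and condI: "\<forall>j\<in>{1..p+q}. \<forall>i\<in>{1..m}. lam p pm j j = -1 \<longrightarrow> \<bar>\<gamma> j i\<bar> \<le> 1"
    and condII: "\<forall>i\<in>{1..m}. \<forall>i'\<in>{1..m}. i \<noteq> i' \<longrightarrow>
        ((\<exists>k\<in>{1..p+q}. lam p pm k k = -1 \<and> \<gamma> k i * \<gamma> k i' < 0)
         \<or> (\<forall>k\<in>{1..p+q}. \<gamma> k i * \<gamma> k i' \<le> 0))"
    and x: "x \<in> KJ p q pm \<gamma> m" "homog (\<lambda>_. 0) x"
  shows "x \<in> Irel p q pm \<gamma> m"
proof -
  have xF: "x \<in> Fcar (p+q) m" and x0: "\<And>f s. rhoA p q pm \<gamma> x f s = 0" using x by (auto simp: KJ_def)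
  have "\<forall>w\<in>Poly_Mapping.keys x. \<exists>c'. pin (p+q) c' \<and>
      Poly_Mapping.single w (Poly_Mapping.lookup x w) - Poly_Mapping.single [] c' \<in> Irel p q pm \<gamma> m"
  proof
    fix w assume w: "w \<in> Poly_Mapping.keys x"
    then have "widx m w" "pin (p+q) (Poly_Mapping.lookup x w)" using Fcar_keys[OF xF] by auto
    moreover have "wdeg w = (\<lambda>_. 0)" using x(2) w by (simp add: homog_def)
    ultimately have "WR p q pm \<gamma> m TYPE('k) w []" using red0[OF sign] by blast
    then show "\<exists>c'. pin (p+q) c' \<and>
      Poly_Mapping.single w (Poly_Mapping.lookup x w) - Poly_Mapping.single [] c' \<in> Irel p q pm \<gamma> m"
      using \<open>pin (p+q) (Poly_Mapping.lookup x w)\<close> unfolding WR_def by blast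
  qed
  then obtain cc where cc: "\<And>w. w \<in> Poly_Mapping.keys x \<Longrightarrow> pin (p+q) (cc w) \<and>
      Poly_Mapping.single w (Poly_Mapping.lookup x w) - Poly_Mapping.single [] (cc w) \<in> Irel p q pm \<gamma> m"
    by metis
  define r where "r = (\<Sum>w\<in>Poly_Mapping.keys x. cc w)"
  have pr: "pin (p+q) r" unfolding r_def using cc by (intro pin_sum) auto
  have "x - Poly_Mapping.single [] r =
      (\<Sum>w\<in>Poly_Mapping.keys x. Poly_Mapping.single w (Poly_Mapping.lookup x w) - Poly_Mapping.single [] (cc w))"
    by (subst (1) pm_expand[of x]) (simp add: r_def single_sum sum_subtractf)
  also have "\<dots> \<in> Irel p q pm \<gamma> m" using cc by (intro is_ideal_sum[OF Irel_ideal]) auto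
  finally have d: "x - Poly_Mapping.single [] r \<in> Irel p q pm \<gamma> m" .
  have dK: "x - Poly_Mapping.single [] r \<in> KJ p q pm \<gamma> m" by (rule subsetD[OF Irel_KJ[OF sign condI condII] d])
  have d0: "rhoA p q pm \<gamma> (x - Poly_Mapping.single [] r) f s = 0" for f s
    using dK unfolding KJ_def by blast
  have "ev (pt p pm l) r = 0" for l
  proof -
    have e: "x - (x - Poly_Mapping.single [] r) = Poly_Mapping.single [] r" by simp
    have "rhoA p q pm \<gamma> (x - (x - Poly_Mapping.single [] r)) (\<lambda>_. 1) (l, \<lambda>_. 0) =
       rhoA p q pm \<gamma> x (\<lambda>_. 1) (l, \<lambda>_. 0) - rhoA p q pm \<gamma> (x - Poly_Mapping.single [] r) (\<lambda>_. 1) (l, \<lambda>_. 0)"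
      by (rule rho_diff)
    then have "rhoA p q pm \<gamma> (Poly_Mapping.single [] r) (\<lambda>_. 1) (l, \<lambda>_. 0) = 0"
      unfolding e using x0 d0 by simp
    then show ?thesis by (simp add: rho_single evs_def)
  qed
  then have "Poly_Mapping.single [] r \<in> Irel p q pm \<gamma> m"
    using faith_N[of "p+q" p q r pm \<gamma> m] pr by simp
  then have "(x - Poly_Mapping.single [] r) + Poly_Mapping.single [] r \<in> Irel p q pm \<gamma> m"
    by (rule is_ideal_add[OF Irel_ideal d])
  then show ?thesis by simp
qed

lemma keys_single_sub: "w \<in> Poly_Mapping.keys (Poly_Mapping.single k c) \<Longrightarrow> w = k"
  by (simp split: if_splits)

lemma keys_gmult: "w \<in> Poly_Mapping.keys (gmult p q pm \<gamma> f h) \<Longrightarrow>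
   \<exists>u\<in>Poly_Mapping.keys f. \<exists>v\<in>Poly_Mapping.keys h. w = u @ v"
proof -
  assume "w \<in> Poly_Mapping.keys (gmult p q pm \<gamma> f h)"
  then have "w \<in> (\<Union>u\<in>Poly_Mapping.keys f. Poly_Mapping.keys (\<Sum>v\<in>Poly_Mapping.keys h.
      Poly_Mapping.single (u @ v) (Poly_Mapping.lookup f u * sigw p q pm \<gamma> u (Poly_Mapping.lookup h v))))"
    unfolding gmult_def by (rule subsetD[OF keys_sum])
  then obtain u where u: "u \<in> Poly_Mapping.keys f" and wu: "w \<in> Poly_Mapping.keys (\<Sum>v\<in>Poly_Mapping.keys h.
      Poly_Mapping.single (u @ v) (Poly_Mapping.lookup f u * sigw p q pm \<gamma> u (Poly_Mapping.lookup h v)))" by blast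
  from wu have "w \<in> (\<Union>v\<in>Poly_Mapping.keys h. Poly_Mapping.keys (
      Poly_Mapping.single (u @ v) (Poly_Mapping.lookup f u * sigw p q pm \<gamma> u (Poly_Mapping.lookup h v))))"
    by (rule subsetD[OF keys_sum])
  then obtain v where v: "v \<in> Poly_Mapping.keys h" and wv:
    "w \<in> Poly_Mapping.keys (Poly_Mapping.single (u @ v) (Poly_Mapping.lookup f u * sigw p q pm \<gamma> u (Poly_Mapping.lookup h v)))"
    by blast
  from wv have "w = u @ v" by (rule keys_single_sub)
  then show ?thesis using u v by blast
qed

lemma keys_gstar: "w \<in> Poly_Mapping.keys (gstar p q pm \<gamma> f) \<Longrightarrow> \<exists>u\<in>Poly_Mapping.keys f. w = starw u"
proof -
  assume "w \<in> Poly_Mapping.keys (gstar p q pm \<gamma> f)"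
  then have "w \<in> (\<Union>u\<in>Poly_Mapping.keys f. Poly_Mapping.keys (
      Poly_Mapping.single (starw u) (sigw p q pm \<gamma> (starw u) (Poly_Mapping.lookup f u))))"
    unfolding gstar_def by (rule subsetD[OF keys_sum])
  then obtain u where u: "u \<in> Poly_Mapping.keys f" and wu:
     "w \<in> Poly_Mapping.keys (Poly_Mapping.single (starw u) (sigw p q pm \<gamma> (starw u) (Poly_Mapping.lookup f u)))"
    by blast
  from wu have "w = starw u" by (rule keys_single_sub)
  then show ?thesis using u by blast
qed

lemma homog_star_mult:
  assumes "homog g a"
  shows "homog (\<lambda>_. 0) (gmult p q pm \<gamma> (gstar p q pm \<gamma> a) a)"
  unfolding homog_def
proof
  fix w assume "w \<in> Poly_Mapping.keys (gmult p q pm \<gamma> (gstar p q pm \<gamma> a) a)"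
  then obtain u v where "u \<in> Poly_Mapping.keys (gstar p q pm \<gamma> a)" "v \<in> Poly_Mapping.keys a" "w = u @ v"
    using keys_gmult by blast
  moreover obtain u' where "u' \<in> Poly_Mapping.keys a" "u = starw u'" using keys_gstar calculation(1) by blast
  ultimately show "wdeg w = (\<lambda>_. 0)" using assms by (simp add: homog_def wdeg_app wdeg_starw)
qed

theorem mainTheorem6:
  fixes p q m :: nat and pm :: int and \<gamma> :: "nat \<Rightarrow> nat \<Rightarrow> int"
    and g :: "nat \<Rightarrow> int" and a :: "'k::{alg_closed_field, field_char_0} tgw"
  assumes sign: "pm = 1 \<or> pm = -1"
    and condI: "\<forall>j\<in>{1..p+q}. \<forall>i\<in>{1..m}. lam p pm j j = -1 \<longrightarrow> \<bar>\<gamma> j i\<bar> \<le> 1"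
    and condII: "\<forall>i\<in>{1..m}. \<forall>i'\<in>{1..m}. i \<noteq> i' \<longrightarrow>
        ((\<exists>k\<in>{1..p+q}. lam p pm k k = -1 \<and> \<gamma> k i * \<gamma> k i' < 0)
         \<or> (\<forall>k\<in>{1..p+q}. \<gamma> k i * \<gamma> k i' \<le> 0))"
    and a_car: "a \<in> Fcar (p+q) m"
    and a_hom: "homog g a"
    and zero: "gmult p q pm \<gamma> (gstar p q pm \<gamma> a) a \<in> Imax p q pm \<gamma> m"
  shows "a \<in> Imax p q pm \<gamma> m"
proof -
  let ?b = "gmult p q pm \<gamma> (gstar p q pm \<gamma> a) a"
  obtain J where J: "is_ideal p q pm \<gamma> m J" "graded_set J" "Irel p q pm \<gamma> m \<subseteq> J"
      "J \<inter> {b. homog (\<lambda>_. 0) b} \<subseteq> Irel p q pm \<gamma> m" "?b \<in> J"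
    using zero unfolding Imax_def by blast
  have "?b \<in> Irel p q pm \<gamma> m" using J(4,5) homog_star_mult[OF a_hom] by blast
  then have "?b \<in> KJ p q pm \<gamma> m" using Irel_KJ[OF sign condI condII] by blast
  then have "\<forall>f s. rhoA p q pm \<gamma> ?b f s = 0" by (simp add: KJ_def)
  then have "rhoA p q pm \<gamma> a f s = 0" for f s by (rule star_kill[OF sign a_car a_hom])
  then have aK: "a \<in> KJ p q pm \<gamma> m" using a_car by (simp add: KJ_def)
  have "is_ideal p q pm \<gamma> m (KJ p q pm \<gamma> m)" by (rule KJ_ideal[OF sign])
  moreover have "graded_set (KJ p q pm \<gamma> m :: 'k tgw set)" by (rule KJ_graded[OF sign])
  moreover have "Irel p q pm \<gamma> m \<subseteq> (KJ p q pm \<gamma> m :: 'k tgw set)" by (rule Irel_KJ[OF sign condI condII])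
  moreover have "KJ p q pm \<gamma> m \<inter> {b. homog (\<lambda>_. 0) b} \<subseteq> (Irel p q pm \<gamma> m :: 'k tgw set)"
    using KJ_deg0[OF sign condI condII] by blast
  ultimately show ?thesis using aK unfolding Imax_def by blast
qed

end
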